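(* Let $p$ be an odd prime, $\omega=e^{2\pi i/p}$, $A\in M_{r\times s}(\mathbb{Z}_p)$, $c\in\mathbb{Z}_p^r$, and let $\Gamma=\Gamma(A,c)$ be the solution group of the linear constraint system $Ax=c\bmod p$. Let $m\ge1$ and let $Q$ be a subgroup with $T_{(p)}\subset Q\subset T_{(p^m)}$ that is invariant under conjugation by $X$, and $N\ge1$. Then the linear constraint system admits a quantum solution $\eta:\Gamma\to K^{\otimes N}_Q(p)$ if and only if it admits a classical solution, i.e. a vector $x\in\mathbb{Z}_p^s$ with $Ax\equiv c\bmod p$ (equivalently, a homomorphism $\Gamma\to\mathbb{Z}_p$ sending $J$ to $1$).
   Context: The solution group $\Gamma(A,c)$ is the finitely presented group with generators $J,g_1,\dots,g_s$ and relations: $g_k^p=e$ for all $k$ and $J^p=e$; $Jg_kJ^{-1}g_k^{-1}=e$ for all $k$, and $g_jg_kg_j^{-1}g_k^{-1}=e$ whenever there is a row $i$ with $A_{ij}\neq0$ and $A_{ik}\neq0$; and $\prod_{j=1}^s g_j^{A_{ij}}=J^{c_i}$ for all $i\in\{1,\dots,r\}$. A quantum solution in a group $G$ of unitaries is a group homomorphism $\eta:\Gamma\to G$ with $\eta(J)=\omega\mathbbm{1}$. Let $\{|q\rangle:q\in\mathbb{Z}_p\}$ be the computational basis of $\mathbb{C}^p$, $X|q\rangle=|q+1\rangle$; for $\xi:\mathbb{Z}_p\to U(1)$, $S_\xi=\mathrm{diag}(\xi(0),\dots,\xi(p-1))$; $T=\{S_\xi:\prod_q\xi(q)=1\}$,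 $T_{(p^k)}=\{S\in T:S^{p^k}=\mathbbm{1}\}$. $K_Q(p)$ is the subgroup of $SU(p)$ generated by all $S_\xi X^b$ with $S_\xi\in Q$, $b\in\mathbb{Z}_p$, and $K_Q^{\otimes N}(p)$ is the group of $N$-fold Kronecker products $M_1\otimes\cdots\otimes M_N$ with $M_i\in K_Q(p)$. *)

theory Defs
  imports Complex_Main "Jordan_Normal_Form.Matrix"
begin

definition omega :: "nat \<Rightarrow> complex" where
  "omega p = cis (2 * pi / real p)"

definition Xmat :: "nat \<Rightarrow> complex mat" where
  "Xmat p = mat p p (\<lambda>(i, j). if i = (j + 1) mod p then 1 else 0)"

definition Smat :: "nat \<Rightarrow> (nat \<Rightarrow> complex) \<Rightarrow> complex mat" where
  "Smat p \<xi> = mat p p (\<lambda>(i, j). if i = j then \<xi> i else 0)"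

definition Tgrp :: "nat \<Rightarrow> complex mat set" where
  "Tgrp p = {Smat p \<xi> | \<xi>. (\<forall>q<p. norm (\<xi> q) = 1) \<and> (\<Prod>q<p. \<xi> q) = 1}"

definition Tpow :: "nat \<Rightarrow> nat \<Rightarrow> complex mat set" where
  "Tpow p n = {S \<in> Tgrp p. S ^\<^sub>m n = 1\<^sub>m p}"

definition is_subgroup_mat :: "nat \<Rightarrow> complex mat set \<Rightarrow> bool" where
  "is_subgroup_mat p Q \<longleftrightarrow> Q \<subseteq> carrier_mat p p \<and> 1\<^sub>m p \<in> Q \<and>
     (\<forall>A\<in>Q. \<forall>B\<in>Q. A * B \<in> Q) \<and> (\<forall>A\<in>Q. \<exists>B\<in>Q. A * B = 1\<^sub>m p)"

inductive_set KQ :: "nat \<Rightarrow> complex mat set \<Rightarrow> complex mat set" for p Q where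
  one: "1\<^sub>m p \<in> KQ p Q"
| gen: "S \<in> Q \<Longrightarrow> b < p \<Longrightarrow> S * (Xmat p ^\<^sub>m b) \<in> KQ p Q"
| mult: "A \<in> KQ p Q \<Longrightarrow> B \<in> KQ p Q \<Longrightarrow> A * B \<in> KQ p Q"
| inv: "A \<in> KQ p Q \<Longrightarrow> B \<in> carrier_mat p p \<Longrightarrow> A * B = 1\<^sub>m p \<Longrightarrow> B \<in> KQ p Q"

text \<open>Kronecker product (row index of A (x) B is i = i1 * dim_row B + i2).\<close>
definition kron :: "complex mat \<Rightarrow> complex mat \<Rightarrow> complex mat" where
  "kron A B = mat (dim_row A * dim_row B) (dim_col A * dim_col B)
     (\<lambda>(i, j). A $$ (i div dim_row B, j div dim_col B) * B $$ (i mod dim_row B, j mod dim_col B))"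

fun kron_list :: "complex mat list \<Rightarrow> complex mat" where
  "kron_list [] = 1\<^sub>m 1"
| "kron_list (M # Ms) = kron M (kron_list Ms)"

definition KQN :: "nat \<Rightarrow> complex mat set \<Rightarrow> nat \<Rightarrow> complex mat set" where
  "KQN p Q N = {kron_list Ms | Ms. length Ms = N \<and> set Ms \<subseteq> KQ p Q}"

definition ord_prod :: "nat \<Rightarrow> nat \<Rightarrow> (nat \<Rightarrow> complex mat) \<Rightarrow> complex mat" where
  "ord_prod n s f = foldr (\<lambda>M acc. M * acc) (map f [0..<s]) (1\<^sub>m n)"

text \<open>A quantum solution of Ax = c mod p (A an r x s matrix over Z_p, entries represented
  by integers taken mod p) in the group G of n x n unitaries: a homomorphism eta from the
  solution group Gamma(A,c) into G with eta(J) = omega * 1.  By the universal property of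
  the presentation, such a homomorphism is exactly an assignment g_j = eta(g_j) in G of the
  generators satisfying the defining relations (with J mapped to omega * 1, which must lie in G).\<close>
definition quantum_solution ::
  "nat \<Rightarrow> nat \<Rightarrow> nat \<Rightarrow> (nat \<Rightarrow> nat \<Rightarrow> int) \<Rightarrow> (nat \<Rightarrow> int) \<Rightarrow> nat \<Rightarrow> complex mat set
     \<Rightarrow> (nat \<Rightarrow> complex mat) \<Rightarrow> bool" where
  "quantum_solution p r s A c n G g \<longleftrightarrow>
     omega p \<cdot>\<^sub>m 1\<^sub>m n \<in> G \<and>
     (\<forall>j<s. g j \<in> G) \<and>
     (\<forall>j<s. g j ^\<^sub>m p = 1\<^sub>m n) \<and>
     (\<forall>j<s. \<forall>k<s. (\<exists>i<r. A i j mod int p \<noteq> 0 \<and> A i k mod int p \<noteq> 0)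
         \<longrightarrow> g j * g k = g k * g j) \<and>
     (\<forall>i<r. ord_prod n s (\<lambda>j. g j ^\<^sub>m nat (A i j mod int p))
            = (omega p ^ nat (c i mod int p)) \<cdot>\<^sub>m 1\<^sub>m n)"

definition classical_solution ::
  "nat \<Rightarrow> nat \<Rightarrow> nat \<Rightarrow> (nat \<Rightarrow> nat \<Rightarrow> int) \<Rightarrow> (nat \<Rightarrow> int) \<Rightarrow> (nat \<Rightarrow> int) \<Rightarrow> bool" where
  "classical_solution p r s A c x \<longleftrightarrow>
     (\<forall>i<r. (\<Sum>j<s. A i j * x j) mod int p = c i mod int p)"

end

theory Submission
  imports Defs "HOL-Computational_Algebra.Primes"
begin

definition per :: "nat \<Rightarrow> (int \<Rightarrow> complex) \<Rightarrow> bool" where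
  "per p f \<longleftrightarrow> (\<forall>t t'. int p dvd (t - t') \<longrightarrow> f t = f t')"

definition gmono :: "nat \<Rightarrow> int \<Rightarrow> (int \<Rightarrow> complex) \<Rightarrow> int \<Rightarrow> complex mat" where
  "gmono p s f b = mat p p (\<lambda>(i, j). if int p dvd (int i - s * int j - b) then f (int i) else 0)"

lemma gmono_carrier[simp]: "gmono p s f b \<in> carrier_mat p p"
  by (simp add: gmono_def)

lemma gmono_dims[simp]: "dim_row (gmono p s f b) = p" "dim_col (gmono p s f b) = p"
  by (simp_all add: gmono_def)

lemma gmono_index: "i < p \<Longrightarrow> j < p \<Longrightarrow>
  gmono p s f b $$ (i, j) = (if int p dvd (int i - s * int j - b) then f (int i) else 0)"
  by (simp add: gmono_def)

lemma sum_single_cong: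
  assumes "p > 0"
  shows "(\<Sum>k<p. if int p dvd (int k - a) then f k else 0) = f (nat (a mod int p))"
proof -
  have "\<And>k. k < p \<Longrightarrow> (int p dvd (int k - a)) = (k = nat (a mod int p))"
  proof -
    fix k assume k: "k < p"
    have "int p dvd (int k - a) \<longleftrightarrow> int k mod int p = a mod int p"
      by (simp add: mod_eq_dvd_iff)
    also have "int k mod int p = int k" using k by simp
    also have "(int k = a mod int p) \<longleftrightarrow> k = nat (a mod int p)"
      using assms by auto
    finally show "(int p dvd (int k - a)) = (k = nat (a mod int p))" .
  qed
  then have "(\<Sum>k<p. if int p dvd (int k - a) then f k else 0)
     = (\<Sum>k<p. if k = nat (a mod int p) then f k else 0)"
    by (intro sum.cong) auto
  also have "\<dots> = f (nat (a mod int p))"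
    using assms by (simp add: nat_less_iff)
  finally show ?thesis .
qed

lemma per_mod: "per p f \<Longrightarrow> f (t mod int p) = f t"
  unfolding per_def by (metis mod_mod_trivial mod_eq_dvd_iff)

lemma per_cong: "per p f \<Longrightarrow> int p dvd (t - t') \<Longrightarrow> f t = f t'"
  unfolding per_def by blast

lemma gmono_mult:
  assumes p: "p > 0" and s1: "s1 * s1 = 1" and g: "per p g"
  shows "gmono p s1 f b * gmono p s2 g c = gmono p (s1 * s2) (\<lambda>t. f t * g (s1 * (t - b))) (s1 * c + b)"
proof (rule eq_matI)
  fix i j assume i: "i < dim_row (gmono p (s1 * s2) (\<lambda>t. f t * g (s1 * (t - b))) (s1 * c + b))"
    and j: "j < dim_col (gmono p (s1 * s2) (\<lambda>t. f t * g (s1 * (t - b))) (s1 * c + b))"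
  then have i: "i < p" and j: "j < p" by auto
  define k0 where "k0 = nat ((s2 * int j + c) mod int p)"
  have k0: "k0 < p" "int k0 = (s2 * int j + c) mod int p" using p by (auto simp: k0_def nat_less_iff)
  have "(gmono p s1 f b * gmono p s2 g c) $$ (i, j)
      = (\<Sum>k<p. gmono p s1 f b $$ (i, k) * gmono p s2 g c $$ (k, j))"
    using i j by (simp add: scalar_prod_def lessThan_atLeast0 row_def col_def)
  also have "\<dots> = (\<Sum>k<p. if int p dvd (int k - (s2 * int j + c)) then gmono p s1 f b $$ (i, k) * g (int k) else 0)"
    using i j by (intro sum.cong) (auto simp: gmono_index algebra_simps)
  also have "\<dots> = gmono p s1 f b $$ (i, k0) * g (int k0)"
    by (subst sum_single_cong[OF p]) (simp add: k0_def)
  also have "\<dots> = (if int p dvd (int i - (s1 * s2) * int j - (s1 * c + b)) then f (int i) * g (s1 * (int i - b)) else 0)"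
  proof -
    have dk: "int p dvd (int k0 - (s2 * int j + c))" using k0(2)
      by (simp add: mod_eq_dvd_iff[symmetric])
    have e1: "int p dvd (int i - s1 * int k0 - b) \<longleftrightarrow> int p dvd (int i - (s1 * s2) * int j - (s1 * c + b))"
    proof -
      have "(int i - (s1 * s2) * int j - (s1 * c + b)) = (int i - s1 * int k0 - b) + s1 * (int k0 - (s2 * int j + c))"
        by (simp add: algebra_simps)
      then show ?thesis using dk by (metis dvd_add_left_iff dvd_mult)
    qed
    have e2: "int p dvd (int i - s1 * int k0 - b) \<Longrightarrow> g (int k0) = g (s1 * (int i - b))"
    proof -
      assume d: "int p dvd (int i - s1 * int k0 - b)"
      have "int k0 - s1 * (int i - b) = - s1 * (int i - s1 * int k0 - b)"
        using s1 by (simp add: algebra_simps)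
      then have "int p dvd (int k0 - s1 * (int i - b))" using d by simp
      then show ?thesis using per_cong[OF g] by blast
    qed
    show ?thesis using e1 e2 i k0 by (simp add: gmono_index)
  qed
  also have "\<dots> = gmono p (s1 * s2) (\<lambda>t. f t * g (s1 * (t - b))) (s1 * c + b) $$ (i, j)"
    using i j by (simp add: gmono_index)
  finally show "(gmono p s1 f b * gmono p s2 g c) $$ (i, j) = gmono p (s1 * s2) (\<lambda>t. f t * g (s1 * (t - b))) (s1 * c + b) $$ (i, j)" .
qed auto

lemma gmono_eq_fun:
  assumes p: "p > 0" and s: "s * s = 1" and f: "per p f" and f': "per p f'"
    and eq: "gmono p s f b = gmono p s f' b"
  shows "f t = f' t"
proof -
  define i where "i = nat (t mod int p)"
  define j where "j = nat ((s * (int i - b)) mod int p)"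
  have i: "i < p" "int i = t mod int p" using p by (auto simp: i_def nat_less_iff)
  have j: "j < p" "int j = (s * (int i - b)) mod int p" using p by (auto simp: j_def nat_less_iff)
  have dj: "int p dvd (int j - s * (int i - b))" using j(2) by (simp add: mod_eq_dvd_iff[symmetric])
  have "int i - s * int j - b = - s * (int j - s * (int i - b))" using s by (simp add: algebra_simps)
  then have d: "int p dvd (int i - s * int j - b)" using dj by simp
  have "gmono p s f b $$ (i, j) = gmono p s f' b $$ (i, j)" using eq by simp
  then have "f (int i) = f' (int i)" using i j d by (simp add: gmono_index)
  moreover have "f (int i) = f t" "f' (int i) = f' t" using i(2) per_mod[OF f] per_mod[OF f'] by auto
  ultimately show ?thesis by simp
qed

lemma gmono_shift_cong:
  assumes "int p dvd (b - b')"
  shows "gmono p s f b = gmono p s f b'"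
proof (intro eq_matI)
  fix i j assume "i < dim_row (gmono p s f b')" "j < dim_col (gmono p s f b')"
  then have ij: "i < p" "j < p" by auto
  have "int i - s * int j - b' = (int i - s * int j - b) + (b - b')" by simp
  then have "int p dvd (int i - s * int j - b) \<longleftrightarrow> int p dvd (int i - s * int j - b')" using assms
    by (metis dvd_add_left_iff)
  then show "gmono p s f b $$ (i, j) = gmono p s f b' $$ (i, j)" using ij by (simp add: gmono_index)
qed auto

lemma dvd_eq_nat:
  assumes a: "x < p" "j < p" "int p dvd (int x - int j)"
  shows "x = j"
proof -
  have "int x mod int p = int j mod int p" using a(3) by (simp add: mod_eq_dvd_iff)
  moreover have "int x mod int p = int x" "int j mod int p = int j" using a(1,2) by auto
  ultimately show "x = j" by simp
qed

lemma gmono_smult: "a \<cdot>\<^sub>m gmono p s f b = gmono p s (\<lambda>t. a * f t) b"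
  by (intro eq_matI) (auto simp: gmono_def)

lemma gmono_one: "1\<^sub>m p = gmono p 1 (\<lambda>_. 1) 0"
proof (intro eq_matI)
  fix i j assume "i < dim_row (gmono p 1 (\<lambda>_. 1) 0)" "j < dim_col (gmono p 1 (\<lambda>_. 1) 0)"
  then have ij: "i < p" "j < p" by auto
  have "int p dvd (int i - int j) \<longleftrightarrow> i = j"
  proof
    assume "int p dvd (int i - int j)"
    then have "int i mod int p = int j mod int p" by (simp add: mod_eq_dvd_iff)
    then show "i = j" using ij by simp
  qed simp
  then show "1\<^sub>m p $$ (i, j) = gmono p 1 (\<lambda>_. 1) 0 $$ (i, j)" using ij by (simp add: gmono_index)
qed auto

lemma Xmat_gmono: assumes "p > 1" shows "Xmat p = gmono p 1 (\<lambda>_. 1) 1"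
proof (intro eq_matI)
  fix i j assume "i < dim_row (gmono p 1 (\<lambda>_. 1) 1)" "j < dim_col (gmono p 1 (\<lambda>_. 1) 1)"
  then have ij: "i < p" "j < p" by auto
  have "i = (j + 1) mod p \<longleftrightarrow> int p dvd (int i - 1 * int j - 1)"
  proof -
    have "i = (j + 1) mod p \<longleftrightarrow> i mod p = (j + 1) mod p" using ij by simp
    also have "\<dots> \<longleftrightarrow> int i mod int p = int (j + 1) mod int p"
      by (metis of_nat_mod of_nat_eq_iff)
    also have "\<dots> \<longleftrightarrow> int p dvd (int i - int (j + 1))" by (simp add: mod_eq_dvd_iff)
    finally show ?thesis by (simp add: algebra_simps)
  qed
  then show "Xmat p $$ (i, j) = gmono p 1 (\<lambda>_. 1) 1 $$ (i, j)" using ij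
    by (simp add: gmono_index Xmat_def)
qed (auto simp: Xmat_def)

lemma Xmat_pow: assumes "p > 1" shows "Xmat p ^\<^sub>m b = gmono p 1 (\<lambda>_. 1) (int b)"
proof (induction b)
  case 0
  then show ?case using gmono_one[of p] by (simp add: Xmat_def)
next
  case (Suc b)
  have "Xmat p ^\<^sub>m Suc b = gmono p 1 (\<lambda>_. 1) (int b) * gmono p 1 (\<lambda>_. 1) 1"
    using Suc Xmat_gmono[OF assms] by simp
  also have "\<dots> = gmono p 1 (\<lambda>_. 1) (1 + int b)"
    using assms by (subst gmono_mult) (auto simp: per_def)
  finally show ?case by (simp add: add.commute)
qed

lemma Smat_gmono: assumes "p > 0" shows "Smat p \<xi> = gmono p 1 (\<lambda>t. \<xi> (nat (t mod int p))) 0"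
proof (intro eq_matI)
  fix i j assume "i < dim_row (gmono p 1 (\<lambda>t. \<xi> (nat (t mod int p))) 0)" "j < dim_col (gmono p 1 (\<lambda>t. \<xi> (nat (t mod int p))) 0)"
  then have ij: "i < p" "j < p" by auto
  have "int p dvd (int i - int j) \<longleftrightarrow> i = j"
  proof
    assume "int p dvd (int i - int j)"
    then have "int i mod int p = int j mod int p" by (simp add: mod_eq_dvd_iff)
    then show "i = j" using ij by simp
  qed simp
  moreover have "nat (int i mod int p) = i" using ij by simp
  ultimately show "Smat p \<xi> $$ (i, j) = gmono p 1 (\<lambda>t. \<xi> (nat (t mod int p))) 0 $$ (i, j)" using ij
    by (simp add: gmono_index Smat_def)
qed (auto simp: Smat_def)

lemma gmono_00: assumes "p > 0" shows "gmono p 1 f b $$ (0, 0) = (if int p dvd b then f 0 else 0)"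
  using assms by (simp add: gmono_index)

lemma gmono_diag_mult_left:
  assumes p: "p > 0" and M: "M \<in> carrier_mat p p" and i: "i < p" and j: "j < p"
  shows "(gmono p 1 f 0 * M) $$ (i, j) = f (int i) * M $$ (i, j)"
proof -
  have "(gmono p 1 f 0 * M) $$ (i, j) = (\<Sum>k<p. gmono p 1 f 0 $$ (i, k) * M $$ (k, j))"
    using i j M by (simp add: scalar_prod_def lessThan_atLeast0 row_def col_def)
  also have "\<dots> = (\<Sum>k<p. if int p dvd (int k - int i) then f (int i) * M $$ (k, j) else 0)"
  proof (intro sum.cong refl)
    fix k assume "k \<in> {..<p}"
    then have k: "k < p" by simp
    have "int p dvd (int i - int k) \<longleftrightarrow> int p dvd (int k - int i)"
      by (metis dvd_diff_commute)
    then show "gmono p 1 f 0 $$ (i, k) * M $$ (k, j) = (if int p dvd (int k - int i) then f (int i) * M $$ (k, j) else 0)"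
      using i k by (simp add: gmono_index)
  qed
  also have "\<dots> = f (int i) * M $$ (i, j)"
    using p i by (subst sum_single_cong[OF p]) simp
  finally show ?thesis .
qed

lemma gmono_diag_mult_right:
  assumes p: "p > 0" and M: "M \<in> carrier_mat p p" and i: "i < p" and j: "j < p"
  shows "(M * gmono p 1 f 0) $$ (i, j) = M $$ (i, j) * f (int j)"
proof -
  have "(M * gmono p 1 f 0) $$ (i, j) = (\<Sum>k<p. M $$ (i, k) * gmono p 1 f 0 $$ (k, j))"
    using i j M by (simp add: scalar_prod_def lessThan_atLeast0 row_def col_def)
  also have "\<dots> = (\<Sum>k<p. if int p dvd (int k - int j) then M $$ (i, j) * f (int j) else 0)"
    using j by (intro sum.cong refl) (auto simp: gmono_index dest: dvd_eq_nat)
  also have "\<dots> = M $$ (i, j) * f (int j)"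
    using p j by (subst sum_single_cong[OF p]) simp
  finally show ?thesis .
qed

lemma per_mult: "per p f \<Longrightarrow> per p g \<Longrightarrow> per p (\<lambda>t. f t * g (s * (t - b)))"
  unfolding per_def
proof (intro allI impI)
  fix t t' assume f: "\<forall>t t'. int p dvd t - t' \<longrightarrow> f t = f t'" and g: "\<forall>t t'. int p dvd t - t' \<longrightarrow> g t = g t'"
    and d: "int p dvd t - t'"
  have "s * (t - b) - s * (t' - b) = s * (t - t')" by (simp add: algebra_simps)
  then have "int p dvd (s * (t - b) - s * (t' - b))" using d by simp
  then show "f t * g (s * (t - b)) = f t' * g (s * (t' - b))" using f g d by metis
qed

lemma per_const[simp]: "per p (\<lambda>_. a)" by (simp add: per_def)

lemma prod_shift:
  assumes p: "p > 0" and g: "per p g"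
  shows "(\<Prod>q<p. g (int q + a)) = (\<Prod>q<p. g (int q))"
proof (rule prod.reindex_bij_witness[where j = "\<lambda>q. nat ((int q + a) mod int p)" and i = "\<lambda>q. nat ((int q - a) mod int p)"])
  fix q assume "q \<in> {..<p}"
  then have q: "q < p" by simp
  have "(((int q + a) mod int p) - a) mod int p = int q mod int p" by (simp add: mod_simps)
  then show "nat ((int (nat ((int q + a) mod int p)) - a) mod int p) = q" using p q by simp
  show "nat ((int q + a) mod int p) \<in> {..<p}" using p by (simp add: nat_less_iff)
  show "g (int (nat ((int q + a) mod int p))) = g (int q + a)" using p per_mod[OF g] by simp
next
  fix q assume "q \<in> {..<p}"
  then have q: "q < p" by simp
  have "(((int q - a) mod int p) + a) mod int p = int q mod int p" by (simp add: mod_simps)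
  then show "nat ((int (nat ((int q - a) mod int p)) + a) mod int p) = q" using p q by simp
  show "nat ((int q - a) mod int p) \<in> {..<p}" using p by (simp add: nat_less_iff)
qed

definition Mono1 :: "nat \<Rightarrow> complex mat set" where
  "Mono1 p = {M. \<exists>f b. M = gmono p 1 f b \<and> per p f \<and> (\<forall>t. f t \<noteq> 0) \<and> (\<Prod>q<p. f (int q)) = 1}"

lemma Mono1_carrier: "M \<in> Mono1 p \<Longrightarrow> M \<in> carrier_mat p p"
  by (auto simp: Mono1_def)

lemma Mono1_one: "1\<^sub>m p \<in> Mono1 p"
  unfolding Mono1_def by (rule CollectI, rule exI[of _ "\<lambda>_. 1"], rule exI[of _ 0]) (simp add: gmono_one)

lemma Mono1_mult:
  assumes p: "p > 0" and A: "A \<in> Mono1 p" and B: "B \<in> Mono1 p"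
  shows "A * B \<in> Mono1 p"
proof -
  obtain f b where A': "A = gmono p 1 f b" "per p f" "\<forall>t. f t \<noteq> 0" "(\<Prod>q<p. f (int q)) = 1"
    using A by (auto simp: Mono1_def)
  obtain g c where B': "B = gmono p 1 g c" "per p g" "\<forall>t. g t \<noteq> 0" "(\<Prod>q<p. g (int q)) = 1"
    using B by (auto simp: Mono1_def)
  have "A * B = gmono p 1 (\<lambda>t. f t * g (1 * (t - b))) (1 * c + b)"
    using A' B' p by (simp add: gmono_mult)
  moreover have "per p (\<lambda>t. f t * g (1 * (t - b)))" using per_mult A'(2) B'(2) by blast
  moreover have "\<forall>t. f t * g (1 * (t - b)) \<noteq> 0" using A'(3) B'(3) by simp
  moreover have "(\<Prod>q<p. f (int q) * g (1 * (int q - b))) = 1"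
  proof -
    have "(\<Prod>q<p. f (int q) * g (1 * (int q - b))) = (\<Prod>q<p. f (int q)) * (\<Prod>q<p. g (int q + (- b)))"
      by (simp add: prod.distrib)
    also have "\<dots> = 1" using prod_shift[OF p B'(2), of "- b"] A'(4) B'(4) by simp
    finally show ?thesis by simp
  qed
  ultimately show ?thesis unfolding Mono1_def by blast
qed

lemma Mono1_inv:
  assumes p: "p > 0" and A: "A \<in> Mono1 p"
  shows "\<exists>B \<in> Mono1 p. A * B = 1\<^sub>m p \<and> B * A = 1\<^sub>m p"
proof -
  obtain f b where A': "A = gmono p 1 f b" "per p f" "\<forall>t. f t \<noteq> 0" "(\<Prod>q<p. f (int q)) = 1"
    using A by (auto simp: Mono1_def)
  define g where "g = (\<lambda>t. 1 / f (t + b))"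
  have pg: "per p g" unfolding g_def per_def
  proof (intro allI impI)
    fix t t' :: int assume "int p dvd t - t'"
    then have "int p dvd (t + b) - (t' + b)" by simp
    then show "1 / f (t + b) = 1 / f (t' + b)" using per_cong[OF A'(2)] by metis
  qed
  have B: "gmono p 1 g (- b) \<in> Mono1 p"
  proof -
    have "(\<Prod>q<p. g (int q)) = 1 / (\<Prod>q<p. f (int q + b))"
      by (simp add: g_def prod_dividef)
    also have "\<dots> = 1" using prod_shift[OF p A'(2)] A'(4) by simp
    finally show ?thesis unfolding Mono1_def using pg A'(3) by (auto simp: g_def)
  qed
  have "A * gmono p 1 g (- b) = gmono p 1 (\<lambda>t. f t * g (1 * (t - b))) (1 * (- b) + b)"
    using A' pg p by (simp add: gmono_mult)
  also have "\<dots> = gmono p 1 (\<lambda>_. 1) 0" using A'(3) by (simp add: g_def)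
  finally have 1: "A * gmono p 1 g (- b) = 1\<^sub>m p" by (simp add: gmono_one)
  have "gmono p 1 g (- b) * A = gmono p 1 (\<lambda>t. g t * f (1 * (t - - b))) (1 * b + - b)"
    using A' pg p by (simp add: gmono_mult)
  also have "\<dots> = gmono p 1 (\<lambda>_. 1) 0" using A'(3) by (simp add: g_def)
  finally have 2: "gmono p 1 g (- b) * A = 1\<^sub>m p" by (simp add: gmono_one)
  show ?thesis using 1 2 B by blast
qed

lemma Mono1_pow:
  assumes p: "p > 0" and A: "A \<in> Mono1 p"
  shows "A ^\<^sub>m k \<in> Mono1 p"
proof (induction k)
  case 0
  then show ?case using Mono1_carrier[OF A] Mono1_one by simp
next
  case (Suc k)
  then show ?case using Mono1_mult[OF p _ A] by simp
qed

lemma Mono1_nonzero: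
  assumes p: "p > 0" and A: "A \<in> Mono1 p"
  shows "\<exists>i j. i < p \<and> j < p \<and> A $$ (i, j) \<noteq> 0"
proof -
  obtain f b where A': "A = gmono p 1 f b" "per p f" "\<forall>t. f t \<noteq> 0"
    using A by (auto simp: Mono1_def)
  define i where "i = nat (b mod int p)"
  have i: "i < p" "int i = b mod int p" using p by (auto simp: i_def nat_less_iff)
  have "int p dvd (int i - 1 * int 0 - b)" using i(2) by (simp add: mod_eq_dvd_iff[symmetric])
  then have "A $$ (i, 0) \<noteq> 0" using A' i p by (simp add: gmono_index)
  then show ?thesis using i p by blast
qed

lemma KQ_Mono1:
  assumes p: "p > 1" and Q: "Q \<subseteq> Tgrp p" and A: "A \<in> KQ p Q"
  shows "A \<in> Mono1 p"
  using A
proof (induction rule: KQ.induct)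
  case one
  then show ?case by (rule Mono1_one)
next
  case (gen S b)
  obtain \<xi> where S: "S = Smat p \<xi>" "\<forall>q<p. norm (\<xi> q) = 1" "(\<Prod>q<p. \<xi> q) = 1"
    using gen Q by (auto simp: Tgrp_def)
  have "S \<in> Mono1 p"
  proof -
    define f where "f = (\<lambda>t. \<xi> (nat (t mod int p)))"
    have "per p f" unfolding per_def f_def by (metis mod_eq_dvd_iff)
    moreover have "\<forall>t. f t \<noteq> 0"
    proof
      fix t have "nat (t mod int p) < p" using p by (simp add: nat_less_iff)
      then have "norm (f t) = 1" using S(2) by (simp add: f_def)
      then show "f t \<noteq> 0" by auto
    qed
    moreover have "(\<Prod>q<p. f (int q)) = 1" using S(3) by (simp add: f_def)
    ultimately show ?thesis unfolding Mono1_def using S(1) Smat_gmono[of p \<xi>] p f_def by auto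
  qed
  moreover have "Xmat p ^\<^sub>m b \<in> Mono1 p"
    unfolding Xmat_pow[OF p] Mono1_def by (rule CollectI, rule exI[of _ "\<lambda>_. 1"], rule exI[of _ "int b"]) simp
  ultimately show ?case using Mono1_mult p by simp
next
  case (mult A B)
  then show ?case using Mono1_mult p by simp
next
  case (inv A B)
  obtain C where C: "C \<in> Mono1 p" "C * A = 1\<^sub>m p" using Mono1_inv[of p A] inv p by auto
  have Ac: "A \<in> carrier_mat p p" "C \<in> carrier_mat p p" using Mono1_carrier inv C by auto
  have "B = (C * A) * B" using C inv by simp
  also have "\<dots> = C * (A * B)" using Ac inv by (simp add: assoc_mult_mat)
  also have "\<dots> = C" using inv Ac by simp
  finally show ?case using C by simp
qed

lemma dvd_mod_diff: "(k::int) dvd (x mod k - x)"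
  by (simp add: mod_eq_dvd_iff[symmetric])

lemma dvd_mod_diff': "(k::int) dvd (x - x mod k)"
  by (simp add: mod_eq_dvd_iff[symmetric])

lemma dvd_comb: "(k::int) dvd a \<Longrightarrow> k dvd b \<Longrightarrow> x = a * y + b * z \<Longrightarrow> k dvd x"
  by (simp add: dvd_add dvd_mult2)

lemma dvd_comb1: "(k::int) dvd a \<Longrightarrow> k dvd b \<Longrightarrow> x = a + b \<Longrightarrow> k dvd x"
  by (simp add: dvd_add)

lemma inv_mod_exists:
  assumes p: "prime p" and b: "\<not> int p dvd b"
  shows "\<exists>u. int p dvd (u * b - 1)"
proof -
  define b' where "b' = nat (b mod int p)"
  have p0: "p > 0" using p prime_gt_0_nat by blast
  have b'i: "int b' = b mod int p" using p0 by (simp add: b'_def)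
  have "\<not> p dvd b'"
  proof
    assume "p dvd b'"
    then have "int p dvd int b'" by simp
    then have "int p dvd b mod int p" using b'i by simp
    then show False using b by (simp add: dvd_mod_iff)
  qed
  then have "coprime p b'" using p prime_imp_coprime by blast
  then have "coprime (int b') (int p)" by (simp add: coprime_commute)
  then obtain u v where uv: "u * int b' + v * int p = 1"
    using bezout_int[of "int b'" "int p"] by auto
  have "u * b - 1 = u * (b - int b') - v * int p" using uv by (simp add: algebra_simps)
  moreover have "int p dvd (b - int b')" using b'i by (simp add: mod_eq_dvd_iff[symmetric] )
  ultimately have "int p dvd (u * b - 1)" by simp
  then show ?thesis by blast
qed

lemma exists_mult:
  assumes p: "prime p" and b: "\<not> int p dvd b"
  shows "\<exists>n::nat. int p dvd (s + int n * b)"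
proof -
  obtain u where u: "int p dvd (u * b - 1)" using inv_mod_exists[OF p b] by blast
  have p0: "p > 0" using p prime_gt_0_nat by blast
  define n where "n = nat ((- s * u) mod int p)"
  have ni: "int n = (- s * u) mod int p" using p0 by (simp add: n_def)
  have d1: "int p dvd (int n - (- s * u))" using ni dvd_mod_diff[of "int p" "- s * u"] by simp
  have "s + int n * b = (int n - (- s * u)) * b + s * (1 - u * b)" by (simp add: algebra_simps)
  moreover have "int p dvd (s * (1 - u * b))" using u by (metis dvd_minus_iff dvd_mult minus_diff_eq)
  ultimately have "int p dvd (s + int n * b)" using d1 by simp
  then show ?thesis by blast
qed

lemma char_from_shift:
  assumes p: "prime p" and b: "\<not> int p dvd b" and per: "per p \<chi>"
    and sh: "\<And>t. \<chi> (t - b) = \<kappa> * \<chi> t"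
  shows "\<chi> (s + t) * \<chi> 0 = \<chi> s * \<chi> t"
proof -
  have it: "\<chi> (t - int n * b) = \<kappa> ^ n * \<chi> t" for n t
  proof (induction n)
    case 0 then show ?case by simp
  next
    case (Suc n)
    have "\<chi> (t - int (Suc n) * b) = \<chi> ((t - int n * b) - b)" by (simp add: algebra_simps)
    also have "\<dots> = \<kappa> * \<chi> (t - int n * b)" by (rule sh)
    finally show ?case using Suc by simp
  qed
  obtain n where n: "int p dvd (s + int n * b)" using exists_mult[OF p b] by blast
  have "(s + t) - (t - int n * b) = s + int n * b" by simp
  then have e1: "\<chi> (s + t) = \<kappa> ^ n * \<chi> t" using n per_cong[OF per, of "s + t" "t - int n * b"] it by simp
  have e2: "\<chi> s = \<kappa> ^ n * \<chi> 0" using n per_cong[OF per, of "s" "0 - int n * b"] it[of 0 n] by simp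
  show ?thesis using e1 e2 by simp
qed

lemma prod_mult_reindex:
  assumes p: "prime p" and b: "\<not> int p dvd b" and g: "per p g"
  shows "(\<Prod>k<p. g (int k * b)) = (\<Prod>q<p. g (int q))"
proof -
  obtain u where u: "int p dvd (u * b - 1)" using inv_mod_exists[OF p b] by blast
  have p0: "p > 0" using p prime_gt_0_nat by blast
  show ?thesis
  proof (rule prod.reindex_bij_witness[where j = "\<lambda>k. nat ((int k * b) mod int p)" and i = "\<lambda>q. nat ((int q * u) mod int p)"])
    fix k assume "k \<in> {..<p}"
    then have k: "k < p" by simp
    have "int p dvd ((int k * b) mod int p * u - int k)"
    proof -
      have a: "int p dvd ((int k * b) mod int p - int k * b)" by (rule dvd_mod_diff)
      have e: "(int k * b) mod int p * u - int k = ((int k * b) mod int p - int k * b) * u + (u * b - 1) * int k"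
        by (simp add: algebra_simps)
      show ?thesis by (rule dvd_comb[OF a u e])
    qed
    then have "((int k * b) mod int p * u) mod int p = int k mod int p" by (simp add: mod_eq_dvd_iff)
    then show "nat ((int (nat ((int k * b) mod int p)) * u) mod int p) = k" using k p0 by simp
    show "nat ((int k * b) mod int p) \<in> {..<p}" using p0 by (simp add: nat_less_iff)
    show "g (int (nat ((int k * b) mod int p))) = g (int k * b)" using p0 per_mod[OF g] by simp
  next
    fix q assume "q \<in> {..<p}"
    then have q: "q < p" by simp
    have "int p dvd ((int q * u) mod int p * b - int q)"
    proof -
      have a: "int p dvd ((int q * u) mod int p - int q * u)" by (rule dvd_mod_diff)
      have e: "(int q * u) mod int p * b - int q = ((int q * u) mod int p - int q * u) * b + (u * b - 1) * int q"
        by (simp add: algebra_simps)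
      show ?thesis by (rule dvd_comb[OF a u e])
    qed
    then have "((int q * u) mod int p * b) mod int p = int q mod int p" by (simp add: mod_eq_dvd_iff)
    then show "nat ((int (nat ((int q * u) mod int p)) * b) mod int p) = q" using q p0 by simp
    show "nat ((int q * u) mod int p) \<in> {..<p}" using p0 by (simp add: nat_less_iff)
  qed
qed

lemma frame_exists:
  assumes p: "prime p" and b: "\<not> int p dvd b" and per: "per p \<xi>" and nz: "\<forall>t. \<xi> t \<noteq> 0"
    and pr: "(\<Prod>q<p. \<xi> (int q)) = 1"
  shows "\<exists>d. per p d \<and> (\<forall>t. d t \<noteq> 0) \<and> (\<forall>t. d t = \<xi> t * d (t - b))"
proof -
  obtain u where u: "int p dvd (u * b - 1)" using inv_mod_exists[OF p b] by blast
  have p0: "p > 0" using p prime_gt_0_nat by blast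
  define n where "n = (\<lambda>t. nat ((t * u) mod int p))"
  define d where "d = (\<lambda>t. \<Prod>k<n t. \<xi> (int (Suc k) * b))"
  have ni: "int (n t) = (t * u) mod int p" for t using p0 by (simp add: n_def)
  have nlt: "n t < p" for t using p0 by (simp add: n_def nat_less_iff)
  have nb: "int p dvd (int (n t) * b - t)" for t
  proof -
    have e: "int (n t) * b - t = (int (n t) - t * u) * b + (u * b - 1) * t" by (simp add: algebra_simps)
    have a: "int p dvd (int (n t) - t * u)" using ni dvd_mod_diff[of "int p" "t * u"] by simp
    show ?thesis by (rule dvd_comb[OF a u e])
  qed
  have perd: "per p d" unfolding per_def
  proof (intro allI impI)
    fix t t' assume "int p dvd t - t'"
    then have "(t * u) mod int p = (t' * u) mod int p"
      by (metis mod_eq_dvd_iff mod_mult_cong)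
    then show "d t = d t'" by (simp add: d_def n_def)
  qed
  have nzd: "\<forall>t. d t \<noteq> 0" using nz by (simp add: d_def)
  have rec: "d t = \<xi> t * d (t - b)" for t
  proof (cases "n t = 0")
    case False
    have "int p dvd (int (n t) - 1 - (t - b) * u)"
    proof -
      have e: "int (n t) - 1 - (t - b) * u = (int (n t) - t * u) + (u * b - 1)" by (simp add: algebra_simps)
      have a: "int p dvd (int (n t) - t * u)" using ni dvd_mod_diff[of "int p" "t * u"] by simp
      show ?thesis by (rule dvd_comb1[OF a u e])
    qed
    then have "(int (n t) - 1) mod int p = ((t - b) * u) mod int p" by (simp add: mod_eq_dvd_iff)
    moreover have "(int (n t) - 1) mod int p = int (n t) - 1" using False nlt[of t] by simp
    ultimately have "int (n (t - b)) = int (n t) - 1" using ni by simp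
    then have nn: "n t = Suc (n (t - b))" using False by linarith
    have "d t = d (t - b) * \<xi> (int (Suc (n (t - b))) * b)" unfolding d_def nn by simp
    also have "\<xi> (int (Suc (n (t - b))) * b) = \<xi> t" using nb[of t] nn per_cong[OF per] by metis
    finally show ?thesis by simp
  next
    case True
    have t0: "int p dvd t" using nb[of t] True by simp
    have "int p dvd (int (p - 1) - (t - b) * u)"
    proof -
      have "int (p - 1) - (t - b) * u = int p + (u * b - 1) - t * u" using p0 by (simp add: algebra_simps of_nat_diff)
      then show ?thesis using u t0 by (metis dvd_add dvd_diff dvd_mult2 dvd_refl)
    qed
    then have "(int (p - 1)) mod int p = ((t - b) * u) mod int p" by (simp add: mod_eq_dvd_iff)
    moreover have "(int (p - 1)) mod int p = int (p - 1)" using p0 by (intro mod_pos_pos_trivial) auto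
    ultimately have "int (n (t - b)) = int (p - 1)" using ni by simp
    then have nn: "n (t - b) = p - 1" by simp
    have "\<xi> t * d (t - b) = \<xi> 0 * (\<Prod>k<p - 1. \<xi> (int (Suc k) * b))"
      using per_cong[OF per, of t 0] t0 by (simp add: d_def nn)
    also have "\<dots> = (\<Prod>k<Suc (p - 1). \<xi> (int k * b))"
      by (subst prod.lessThan_Suc_shift) simp
    also have "\<dots> = (\<Prod>k<p. \<xi> (int k * b))" using p0 by simp
    also have "\<dots> = 1" using prod_mult_reindex[OF p b per] pr by simp
    also have "1 = d t" by (simp add: d_def True)
    finally show ?thesis by simp
  qed
  show ?thesis using perd nzd rec by blast
qed

definition charlike :: "nat \<Rightarrow> (int \<Rightarrow> complex) \<Rightarrow> bool" where
  "charlike p \<chi> \<longleftrightarrow> per p \<chi> \<and> (\<forall>t. \<chi> t \<noteq> 0) \<and> (\<forall>s t. \<chi> (s + t) * \<chi> 0 = \<chi> s * \<chi> t)"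

definition dP :: "nat \<Rightarrow> (int \<Rightarrow> complex) \<Rightarrow> complex mat \<Rightarrow> bool" where
  "dP p d H \<longleftrightarrow> (\<exists>\<eta> c. H = gmono p 1 \<eta> c \<and> per p \<eta> \<and> (\<forall>t. \<eta> t \<noteq> 0)
      \<and> charlike p (\<lambda>t. \<eta> t * d (t - c) / d t))"

definition Rd :: "nat \<Rightarrow> (int \<Rightarrow> complex) \<Rightarrow> complex mat" where
  "Rd p d = gmono p (-1) (\<lambda>t. d t / d (- t)) 0"

lemma per_chi:
  assumes "per p \<eta>" "per p d"
  shows "per p (\<lambda>t. \<eta> t * d (t - c) / d t)"
  unfolding per_def
proof (intro allI impI)
  fix t t' assume a: "int p dvd t - t'"
  have "(t - c) - (t' - c) = t - t'" by simp
  then have "int p dvd (t - c) - (t' - c)" using a by simp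
  then show "\<eta> t * d (t - c) / d t = \<eta> t' * d (t' - c) / d t'"
    using a per_cong[OF assms(1)] per_cong[OF assms(2)] by metis
qed

lemma class_dP:
  assumes p: "prime p" and perx: "per p \<xi>" and nzx: "\<forall>t. \<xi> t \<noteq> 0" and b: "\<not> int p dvd b"
    and perd: "per p d" and nzd: "\<forall>t. d t \<noteq> 0" and fr: "\<forall>t. d t = \<xi> t * d (t - b)"
    and pere: "per p \<eta>" and nze: "\<forall>t. \<eta> t \<noteq> 0"
    and comm: "gmono p 1 \<eta> c * gmono p 1 \<xi> b = \<mu> \<cdot>\<^sub>m (gmono p 1 \<xi> b * gmono p 1 \<eta> c)"
  shows "dP p d (gmono p 1 \<eta> c)"
proof -
  have p0: "p > 0" using p prime_gt_0_nat by blast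
  have "gmono p 1 \<eta> c * gmono p 1 \<xi> b = gmono p 1 (\<lambda>t. \<eta> t * \<xi> (t - c)) (b + c)"
    using gmono_mult[OF p0 _ perx, of 1 \<eta> c 1 b] by (simp add: add.commute)
  moreover have "\<mu> \<cdot>\<^sub>m (gmono p 1 \<xi> b * gmono p 1 \<eta> c) = gmono p 1 (\<lambda>t. \<mu> * (\<xi> t * \<eta> (t - b))) (b + c)"
    using gmono_mult[OF p0 _ pere, of 1 \<xi> b 1 c] by (simp add: gmono_smult add.commute)
  ultimately have eqm: "gmono p 1 (\<lambda>t. \<eta> t * \<xi> (t - c)) (b + c) = gmono p 1 (\<lambda>t. \<mu> * (\<xi> t * \<eta> (t - b))) (b + c)"
    using comm by simp
  have per1: "per p (\<lambda>t. \<eta> t * \<xi> (t - c))" using per_mult[OF pere perx, of 1 c] by simp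
  have per2: "per p (\<lambda>t. \<mu> * (\<xi> t * \<eta> (t - b)))"
    using per_mult[OF perx pere, of 1 b] unfolding per_def by (metis (no_types, lifting) mult_1)
  have E: "\<eta> t * \<xi> (t - c) = \<mu> * (\<xi> t * \<eta> (t - b))" for t
    using gmono_eq_fun[OF p0 _ per1 per2 eqm] by simp
  have mu0: "\<mu> \<noteq> 0" using E[of 0] nze nzx by auto
  define \<chi> where "\<chi> = (\<lambda>t. \<eta> t * d (t - c) / d t)"
  have sh: "\<chi> t = \<mu> * \<chi> (t - b)" for t
  proof -
    have f1: "d t = \<xi> t * d (t - b)" using fr by blast
    have f2: "d (t - c) = \<xi> (t - c) * d (t - c - b)" using fr by blast
    have tt: "t - b - c = t - c - b" by simp
    have "\<chi> t = \<eta> t * \<xi> (t - c) * d (t - c - b) / (\<xi> t * d (t - b))"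
      unfolding \<chi>_def f2 f1[symmetric] by simp
    also have "\<dots> = \<mu> * (\<xi> t * \<eta> (t - b)) * d (t - c - b) / (\<xi> t * d (t - b))"
      using E by simp
    also have "\<dots> = \<mu> * (\<eta> (t - b) * d (t - b - c) / d (t - b))"
      using nzx nzd tt by (simp add: field_simps)
    also have "\<dots> = \<mu> * \<chi> (t - b)" by (simp add: \<chi>_def)
    finally show ?thesis .
  qed
  have pch: "per p \<chi>" unfolding \<chi>_def by (rule per_chi[OF pere perd])
  have sh': "\<chi> (t - b) = (1 / \<mu>) * \<chi> t" for t using sh[of t] mu0 by simp
  have ch: "\<chi> (s + t) * \<chi> 0 = \<chi> s * \<chi> t" for s t
    by (rule char_from_shift[OF p b pch sh'])
  have "charlike p \<chi>" unfolding charlike_def using pch ch nze nzd by (simp add: \<chi>_def)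
  then show ?thesis unfolding dP_def \<chi>_def using pere nze by blast
qed

lemma dP_scomm:
  assumes p0: "p > 0" and perd: "per p d" and nzd: "\<forall>t. d t \<noteq> 0"
    and H1: "dP p d H1" and H2: "dP p d H2"
  shows "\<exists>\<mu>. H1 * H2 = \<mu> \<cdot>\<^sub>m (H2 * H1)"
proof -
  obtain \<eta>1 c1 where h1: "H1 = gmono p 1 \<eta>1 c1" "per p \<eta>1" "\<forall>t. \<eta>1 t \<noteq> 0"
    "charlike p (\<lambda>t. \<eta>1 t * d (t - c1) / d t)" using H1 unfolding dP_def by blast
  obtain \<eta>2 c2 where h2: "H2 = gmono p 1 \<eta>2 c2" "per p \<eta>2" "\<forall>t. \<eta>2 t \<noteq> 0"
    "charlike p (\<lambda>t. \<eta>2 t * d (t - c2) / d t)" using H2 unfolding dP_def by blast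
  define \<chi>1 where "\<chi>1 = (\<lambda>t. \<eta>1 t * d (t - c1) / d t)"
  define \<chi>2 where "\<chi>2 = (\<lambda>t. \<eta>2 t * d (t - c2) / d t)"
  have c1: "\<forall>t. \<chi>1 t \<noteq> 0" "\<And>s t. \<chi>1 (s + t) * \<chi>1 0 = \<chi>1 s * \<chi>1 t"
    using h1(4) unfolding charlike_def \<chi>1_def by auto
  have c2: "\<forall>t. \<chi>2 t \<noteq> 0" "\<And>s t. \<chi>2 (s + t) * \<chi>2 0 = \<chi>2 s * \<chi>2 t"
    using h2(4) unfolding charlike_def \<chi>2_def by auto
  have e1: "\<eta>1 t = \<chi>1 t * d t / d (t - c1)" for t using nzd by (simp add: \<chi>1_def)
  have e2: "\<eta>2 t = \<chi>2 t * d t / d (t - c2)" for t using nzd by (simp add: \<chi>2_def)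
  define \<mu> where "\<mu> = \<chi>1 c2 * \<chi>2 0 / (\<chi>1 0 * \<chi>2 c1)"
  have key: "\<eta>1 t * \<eta>2 (t - c1) = \<mu> * (\<eta>2 t * \<eta>1 (t - c2))" for t
  proof -
    have k1: "\<chi>1 t * \<chi>1 0 = \<chi>1 (t - c2) * \<chi>1 c2" using c1(2)[of "t - c2" c2] by simp
    have k2: "\<chi>2 t * \<chi>2 0 = \<chi>2 (t - c1) * \<chi>2 c1" using c2(2)[of "t - c1" c1] by simp
    have tt: "t - c1 - c2 = t - c2 - c1" by simp
    have "\<eta>1 t * \<eta>2 (t - c1) = \<chi>1 t * \<chi>2 (t - c1) * (d t / d (t - c2 - c1))"
      unfolding e1[of t] e2[of "t - c1"] tt using nzd by (simp add: field_simps)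
    moreover have "\<eta>2 t * \<eta>1 (t - c2) = \<chi>2 t * \<chi>1 (t - c2) * (d t / d (t - c2 - c1))"
      unfolding e2[of t] e1[of "t - c2"] using nzd by (simp add: field_simps)
    moreover have "\<chi>1 t * \<chi>2 (t - c1) = \<mu> * (\<chi>2 t * \<chi>1 (t - c2))"
    proof -
      have "\<mu> * (\<chi>2 t * \<chi>1 (t - c2)) = (\<chi>1 (t - c2) * \<chi>1 c2) * (\<chi>2 t * \<chi>2 0) / (\<chi>1 0 * \<chi>2 c1)"
        by (simp add: \<mu>_def field_simps)
      also have "\<dots> = (\<chi>1 t * \<chi>1 0) * (\<chi>2 (t - c1) * \<chi>2 c1) / (\<chi>1 0 * \<chi>2 c1)"
        using k1 k2 by simp
      also have "\<dots> = \<chi>1 t * \<chi>2 (t - c1)" using c1(1) c2(1) by (simp add: field_simps)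
      finally show ?thesis by simp
    qed
    ultimately show ?thesis by simp
  qed
  have "H1 * H2 = gmono p 1 (\<lambda>t. \<eta>1 t * \<eta>2 (t - c1)) (c1 + c2)"
    using gmono_mult[OF p0 _ h2(2), of 1 \<eta>1 c1 1 c2] h1(1) h2(1) by (simp add: add.commute)
  also have "\<dots> = gmono p 1 (\<lambda>t. \<mu> * (\<eta>2 t * \<eta>1 (t - c2))) (c1 + c2)"
    using key by simp
  also have "\<dots> = \<mu> \<cdot>\<^sub>m (H2 * H1)"
    using gmono_mult[OF p0 _ h1(2), of 1 \<eta>2 c2 1 c1] h1(1) h2(1) by (simp add: gmono_smult add.commute)
  finally show ?thesis by blast
qed

lemma Rd_carrier: "Rd p d \<in> carrier_mat p p" by (simp add: Rd_def)

lemma Rd_00: assumes "p > 0" "\<forall>t. d t \<noteq> 0" shows "Rd p d $$ (0, 0) \<noteq> 0"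
  using assms by (simp add: Rd_def gmono_index)

lemma dP_compat:
  assumes p0: "p > 0" and perd: "per p d" and nzd: "\<forall>t. d t \<noteq> 0" and H: "dP p d H"
  shows "\<exists>l. H * Rd p d * H = l \<cdot>\<^sub>m Rd p d"
proof -
  obtain \<eta> c where h: "H = gmono p 1 \<eta> c" "per p \<eta>" "\<forall>t. \<eta> t \<noteq> 0"
    "charlike p (\<lambda>t. \<eta> t * d (t - c) / d t)" using H unfolding dP_def by blast
  define \<chi> where "\<chi> = (\<lambda>t. \<eta> t * d (t - c) / d t)"
  have ch: "\<And>s t. \<chi> (s + t) * \<chi> 0 = \<chi> s * \<chi> t"
    using h(4) unfolding charlike_def \<chi>_def by auto
  have e: "\<eta> t = \<chi> t * d t / d (t - c)" for t using nzd by (simp add: \<chi>_def)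
  define \<rho> where "\<rho> = (\<lambda>t. d t / d (- t))"
  have perr: "per p \<rho>" unfolding per_def \<rho>_def
  proof (intro allI impI)
    fix t t' assume a: "int p dvd t - t'"
    then have "int p dvd (- t) - (- t')" by (metis dvd_minus_iff minus_diff_eq diff_minus_eq_add add.commute uminus_add_conv_diff)
    then show "d t / d (- t) = d t' / d (- t')" using a per_cong[OF perd] by metis
  qed
  have "H * Rd p d = gmono p (-1) (\<lambda>t. \<eta> t * \<rho> (t - c)) c"
    using gmono_mult[OF p0 _ perr, of 1 \<eta> c "-1" 0] h(1) by (simp add: Rd_def \<rho>_def)
  also have "\<dots> * H = gmono p (-1) (\<lambda>t. \<eta> t * \<rho> (t - c) * \<eta> (- (t - c))) 0"
    using gmono_mult[OF p0 _ h(2), of "-1" "\<lambda>t. \<eta> t * \<rho> (t - c)" c 1 c] h(1) by simp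
  also have "\<dots> = gmono p (-1) (\<lambda>t. (\<chi> c * \<chi> 0) * \<rho> t) 0"
  proof -
    have "\<eta> t * \<rho> (t - c) * \<eta> (- (t - c)) = (\<chi> c * \<chi> 0) * \<rho> t" for t
    proof -
      have k: "\<chi> c * \<chi> 0 = \<chi> t * \<chi> (c - t)" using ch[of t "c - t"] by simp
      have m: "- (t - c) = c - t" "c - t - c = - t" by simp_all
      have "\<eta> t * \<rho> (t - c) * \<eta> (- (t - c)) = \<chi> t * \<chi> (c - t) * \<rho> t"
        unfolding m(1) e[of t] e[of "c - t"] m(2) \<rho>_def using nzd by (simp add: field_simps)
      then show ?thesis using k by simp
    qed
    then show ?thesis by simp
  qed
  also have "\<dots> = (\<chi> c * \<chi> 0) \<cdot>\<^sub>m Rd p d" by (simp add: Rd_def gmono_smult \<rho>_def)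
  finally show ?thesis by blast
qed

lemma smult_smult_mat': "a \<cdot>\<^sub>m (b \<cdot>\<^sub>m A) = (a * b) \<cdot>\<^sub>m (A :: complex mat)"
  by (intro eq_matI) auto

lemma assoc_pp: "A \<in> carrier_mat p p \<Longrightarrow> B \<in> carrier_mat p p \<Longrightarrow> C \<in> carrier_mat p p \<Longrightarrow> A * B * C = A * (B * (C :: complex mat))"
  by simp

lemma mult_pp: "A \<in> carrier_mat p p \<Longrightarrow> B \<in> carrier_mat p p \<Longrightarrow> A * (B :: complex mat) \<in> carrier_mat p p"
  by simp

lemma smult_one_mat'[simp]: "1 \<cdot>\<^sub>m (A :: complex mat) = A"
  by (intro eq_matI) auto

lemma smult_eq_nonzero:
  assumes "M $$ (i, j) \<noteq> 0" "i < dim_row M" "j < dim_col M" "a \<cdot>\<^sub>m M = b \<cdot>\<^sub>m (M :: complex mat)"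
  shows "a = b"
proof -
  have "(a \<cdot>\<^sub>m M) $$ (i, j) = (b \<cdot>\<^sub>m M) $$ (i, j)" using assms(4) by simp
  then have "a * M $$ (i, j) = b * M $$ (i, j)" using assms(2,3) by simp
  then show ?thesis using assms(1) by simp
qed

definition scomm :: "complex mat \<Rightarrow> complex mat \<Rightarrow> bool" where
  "scomm H M \<longleftrightarrow> (\<exists>\<mu>. H * M = \<mu> \<cdot>\<^sub>m (M * H))"

definition Cls :: "nat \<Rightarrow> complex mat \<Rightarrow> complex mat set" where
  "Cls p M = {H \<in> Mono1 p. scomm H M}"

definition compat :: "complex mat \<Rightarrow> complex mat \<Rightarrow> bool" where
  "compat R M \<longleftrightarrow> (\<exists>l. M * R * M = l \<cdot>\<^sub>m R)"

definition Rof :: "nat \<Rightarrow> complex mat set \<Rightarrow> complex mat" where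
  "Rof p C = (SOME R. R \<in> carrier_mat p p \<and> R $$ (0, 0) \<noteq> 0 \<and> (\<forall>H\<in>C. compat R H))"

definition lamR :: "complex mat \<Rightarrow> complex mat \<Rightarrow> complex" where
  "lamR R M = (SOME l. M * R * M = l \<cdot>\<^sub>m R)"

definition Fq :: "nat \<Rightarrow> complex mat \<Rightarrow> complex" where
  "Fq p M = (if M $$ (0, 0) \<noteq> 0 then (M $$ (0, 0)) ^ (p + 1)
             else (lamR (Rof p (Cls p M)) M) ^ ((p + 1) div 2))"

lemma lamR_eq:
  assumes p0: "p > 0" and R: "R \<in> carrier_mat p p" "R $$ (0, 0) \<noteq> 0" and e: "M * R * M = l \<cdot>\<^sub>m R"
  shows "lamR R M = l"
proof -
  have "M * R * M = lamR R M \<cdot>\<^sub>m R" unfolding lamR_def using e by (rule someI)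
  then have "lamR R M \<cdot>\<^sub>m R = l \<cdot>\<^sub>m R" using e by simp
  then show ?thesis using smult_eq_nonzero[of R 0 0] R p0 by auto
qed

lemma lam_mult:
  fixes R G H :: "complex mat"
  assumes R: "R \<in> carrier_mat p p" and G: "G \<in> carrier_mat p p" and H: "H \<in> carrier_mat p p"
    and a: "G * R * G = a \<cdot>\<^sub>m R" and b: "H * R * H = b \<cdot>\<^sub>m R" and c: "G * H = \<mu> \<cdot>\<^sub>m (H * G)"
  shows "(G * H) * R * (G * H) = (\<mu> * a * b) \<cdot>\<^sub>m R"
proof -
  have HG: "H * G \<in> carrier_mat p p" using G H by simp
  have "(G * H) * R * (G * H) = (\<mu> \<cdot>\<^sub>m (H * G)) * R * (G * H)" using c by simp
  also have "(\<mu> \<cdot>\<^sub>m (H * G)) * R = \<mu> \<cdot>\<^sub>m ((H * G) * R)"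
    by (rule mult_smult_assoc_mat[OF HG R])
  also have "(\<mu> \<cdot>\<^sub>m ((H * G) * R)) * (G * H) = \<mu> \<cdot>\<^sub>m ((H * G) * R * (G * H))"
    by (rule mult_smult_assoc_mat[of _ p p _ p]) (use HG R G H in auto)
  also have "(H * G) * R * (G * H) = H * (G * R * G) * H"
    using R G H by (simp add: assoc_pp[of _ p] mult_pp[of _ p])
  also have "H * (G * R * G) * H = a \<cdot>\<^sub>m (H * R * H)"
    unfolding a using R H by (simp add: mult_smult_distrib[of _ p p _ p] mult_smult_assoc_mat[of _ p p _ p])
  also have "a \<cdot>\<^sub>m (H * R * H) = (a * b) \<cdot>\<^sub>m R" unfolding b by (simp add: smult_smult_mat')
  also have "\<mu> \<cdot>\<^sub>m ((a * b) \<cdot>\<^sub>m R) = (\<mu> * a * b) \<cdot>\<^sub>m R" by (simp add: smult_smult_mat' mult.assoc)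
  finally show ?thesis .
qed

lemma diag_lam:
  assumes p0: "p > 0" and H: "H = gmono p 1 \<eta> c" and c: "int p dvd c"
    and R: "R \<in> carrier_mat p p" "R $$ (0, 0) \<noteq> 0" and e: "H * R * H = l \<cdot>\<^sub>m R"
  shows "l = \<eta> 0 ^ 2" and "H $$ (0, 0) = \<eta> 0"
proof -
  have H0: "H = gmono p 1 \<eta> 0" using H gmono_shift_cong[of p c 0] c by simp
  have "(H * R * H) $$ (0, 0) = (H * R) $$ (0, 0) * \<eta> 0"
    unfolding H0 using p0 R by (subst gmono_diag_mult_right) auto
  also have "(H * R) $$ (0, 0) = \<eta> 0 * R $$ (0, 0)"
    unfolding H0 using p0 R by (subst gmono_diag_mult_left) auto
  finally have "(H * R * H) $$ (0, 0) = \<eta> 0 ^ 2 * R $$ (0, 0)" by (simp add: power2_eq_square)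
  moreover have "(l \<cdot>\<^sub>m R) $$ (0, 0) = l * R $$ (0, 0)" using R p0 by simp
  ultimately show "l = \<eta> 0 ^ 2" using e R by simp
  show "H $$ (0, 0) = \<eta> 0" unfolding H0 using p0 by (simp add: gmono_index)
qed

lemma Mono1_diag_iff:
  assumes p0: "p > 0" and M: "M = gmono p 1 f b" and nz: "\<forall>t. f t \<noteq> 0"
  shows "M $$ (0, 0) \<noteq> 0 \<longleftrightarrow> int p dvd b"
  using M nz p0 by (simp add: gmono_index)

lemma Mono1_mult_nz:
  assumes p0: "p > 0" and G: "G \<in> Mono1 p" and H: "H \<in> Mono1 p" and e: "G * H = \<mu> \<cdot>\<^sub>m (H * G)"
  shows "\<mu> \<noteq> 0"
proof
  assume "\<mu> = 0"
  then have z: "G * H = 0\<^sub>m p p" using e Mono1_carrier[OF G] Mono1_carrier[OF H]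
    by (intro eq_matI) auto
  obtain i j where "i < p" "j < p" "(G * H) $$ (i, j) \<noteq> 0"
    using Mono1_nonzero[OF p0 Mono1_mult[OF p0 G H]] by blast
  then show False using z by simp
qed

lemma scomm_sym:
  assumes p0: "p > 0" and G: "G \<in> Mono1 p" and H: "H \<in> Mono1 p" and s: "scomm G H"
  shows "scomm H G"
proof -
  obtain \<mu> where e: "G * H = \<mu> \<cdot>\<^sub>m (H * G)" using s unfolding scomm_def by blast
  have m: "\<mu> \<noteq> 0" by (rule Mono1_mult_nz[OF p0 G H e])
  have "(1 / \<mu>) \<cdot>\<^sub>m (G * H) = H * G" using e m by (simp add: smult_smult_mat')
  then show ?thesis unfolding scomm_def by metis
qed

lemma scomm_refl: "scomm G G"
  unfolding scomm_def by (rule exI[of _ 1]) simp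

lemma class_frame:
  assumes p: "prime p" and G: "G \<in> Mono1 p" and nd: "G $$ (0, 0) = 0"
  shows "\<exists>d. per p d \<and> (\<forall>t. d t \<noteq> 0) \<and> (\<forall>H\<in>Cls p G. dP p d H)"
proof -
  have p0: "p > 0" using p prime_gt_0_nat by blast
  obtain \<xi> b where g: "G = gmono p 1 \<xi> b" "per p \<xi>" "\<forall>t. \<xi> t \<noteq> 0" "(\<Prod>q<p. \<xi> (int q)) = 1"
    using G by (auto simp: Mono1_def)
  have b: "\<not> int p dvd b" using Mono1_diag_iff[OF p0 g(1) g(3)] nd by simp
  obtain d where d: "per p d" "\<forall>t. d t \<noteq> 0" "\<forall>t. d t = \<xi> t * d (t - b)"
    using frame_exists[OF p b g(2) g(3) g(4)] by blast
  have "\<forall>H\<in>Cls p G. dP p d H"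
  proof
    fix H assume "H \<in> Cls p G"
    then have H: "H \<in> Mono1 p" "scomm H G" by (auto simp: Cls_def)
    obtain \<eta> c where h: "H = gmono p 1 \<eta> c" "per p \<eta>" "\<forall>t. \<eta> t \<noteq> 0"
      using H(1) by (auto simp: Mono1_def)
    obtain \<mu> where e: "H * G = \<mu> \<cdot>\<^sub>m (G * H)" using H(2) unfolding scomm_def by blast
    show "dP p d H" unfolding h(1)
      by (rule class_dP[OF p g(2) g(3) b d(1) d(2) d(3) h(2) h(3)]) (use e g h in simp)
  qed
  then show ?thesis using d by blast
qed

lemma Rof_spec:
  assumes p: "prime p" and G: "G \<in> Mono1 p" and nd: "G $$ (0, 0) = 0"
  shows "Rof p (Cls p G) \<in> carrier_mat p p \<and> Rof p (Cls p G) $$ (0, 0) \<noteq> 0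
     \<and> (\<forall>H\<in>Cls p G. compat (Rof p (Cls p G)) H)"
proof -
  have p0: "p > 0" using p prime_gt_0_nat by blast
  obtain d where d: "per p d" "\<forall>t. d t \<noteq> 0" "\<forall>H\<in>Cls p G. dP p d H"
    using class_frame[OF p G nd] by blast
  have "Rd p d \<in> carrier_mat p p \<and> Rd p d $$ (0, 0) \<noteq> 0 \<and> (\<forall>H\<in>Cls p G. compat (Rd p d) H)"
    using Rd_carrier Rd_00[OF p0 d(2)] dP_compat[OF p0 d(1) d(2)] d(3) unfolding compat_def by blast
  then show ?thesis unfolding Rof_def by (rule someI)
qed

lemma Cls_sub:
  assumes p: "prime p" and G: "G \<in> Mono1 p" and nd: "G $$ (0, 0) = 0" and G': "G' \<in> Cls p G"
  shows "Cls p G \<subseteq> Cls p G'"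
proof
  have p0: "p > 0" using p prime_gt_0_nat by blast
  obtain d where d: "per p d" "\<forall>t. d t \<noteq> 0" "\<forall>H\<in>Cls p G. dP p d H"
    using class_frame[OF p G nd] by blast
  fix H assume H: "H \<in> Cls p G"
  have "scomm H G'" unfolding scomm_def using dP_scomm[OF p0 d(1) d(2)] d(3) H G' by blast
  then show "H \<in> Cls p G'" using H by (simp add: Cls_def)
qed

lemma Cls_eq:
  assumes p: "prime p" and G: "G \<in> Mono1 p" and nd: "G $$ (0, 0) = 0"
    and nd': "G' $$ (0, 0) = 0" and G': "G' \<in> Cls p G"
  shows "Cls p G' = Cls p G"
proof
  have p0: "p > 0" using p prime_gt_0_nat by blast
  show "Cls p G \<subseteq> Cls p G'" by (rule Cls_sub[OF p G nd G'])
  have G'm: "G' \<in> Mono1 p" using G' by (simp add: Cls_def)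
  have "G \<in> Cls p G'" using G scomm_sym[OF p0 G'm G] G' by (simp add: Cls_def)
  then show "Cls p G' \<subseteq> Cls p G" by (rule Cls_sub[OF p G'm nd'])
qed

lemma Fq_class:
  assumes p: "prime p" and odd: "odd p" and G: "G \<in> Mono1 p" and nd: "G $$ (0, 0) = 0"
    and M: "M \<in> Cls p G"
  shows "Fq p M = lamR (Rof p (Cls p G)) M ^ ((p + 1) div 2)"
proof -
  have p0: "p > 0" using p prime_gt_0_nat by blast
  have Mm: "M \<in> Mono1 p" using M by (simp add: Cls_def)
  note spec = Rof_spec[OF p G nd]
  show ?thesis
  proof (cases "M $$ (0, 0) = 0")
    case True
    then show ?thesis using Cls_eq[OF p G nd True M] by (simp add: Fq_def)
  next
    case False
    obtain \<eta> c where h: "M = gmono p 1 \<eta> c" "per p \<eta>" "\<forall>t. \<eta> t \<noteq> 0"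
      using Mm by (auto simp: Mono1_def)
    have c: "int p dvd c" using Mono1_diag_iff[OF p0 h(1) h(3)] False by simp
    obtain l where l: "M * Rof p (Cls p G) * M = l \<cdot>\<^sub>m Rof p (Cls p G)"
      using spec M unfolding compat_def by blast
    have l2: "l = \<eta> 0 ^ 2" and m0: "M $$ (0, 0) = \<eta> 0"
      using diag_lam[OF p0 h(1) c _ _ l] spec by auto
    have lr: "lamR (Rof p (Cls p G)) M = l" using lamR_eq[OF p0 _ _ l] spec by auto
    have "(p + 1) = 2 * ((p + 1) div 2)" using odd by presburger
    then have "\<eta> 0 ^ (p + 1) = (\<eta> 0 ^ 2) ^ ((p + 1) div 2)" by (metis power_mult)
    then show ?thesis using False m0 lr l2 by (simp add: Fq_def)
  qed
qed

lemma Cls_mem: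
  assumes "G \<in> Mono1 p" "scomm G H" shows "G \<in> Cls p H"
  using assms by (simp add: Cls_def)

theorem Fq_qh:
  assumes p: "prime p" and odd: "odd p" and G: "G \<in> Mono1 p" and H: "H \<in> Mono1 p"
    and e: "G * H = \<mu> \<cdot>\<^sub>m (H * G)"
  shows "Fq p (G * H) = \<mu> ^ ((p + 1) div 2) * Fq p G * Fq p H"
proof -
  have p0: "p > 0" using p prime_gt_0_nat by blast
  define k where "k = (p + 1) div 2"
  have GH: "G * H \<in> Mono1 p" by (rule Mono1_mult[OF p0 G H])
  have Gc: "G \<in> carrier_mat p p" and Hc: "H \<in> carrier_mat p p" using G H Mono1_carrier by auto
  have mu0: "\<mu> \<noteq> 0" by (rule Mono1_mult_nz[OF p0 G H e])
  have genR: "Fq p (G * H) = \<mu> ^ k * Fq p G * Fq p H"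
    if K: "K \<in> Mono1 p" "K $$ (0, 0) = 0" and inC: "G \<in> Cls p K" "H \<in> Cls p K" "G * H \<in> Cls p K" for K
  proof -
    define R where "R = Rof p (Cls p K)"
    note spec = Rof_spec[OF p K]
    obtain a where a: "G * R * G = a \<cdot>\<^sub>m R" using spec inC unfolding compat_def R_def by blast
    obtain b where b: "H * R * H = b \<cdot>\<^sub>m R" using spec inC unfolding compat_def R_def by blast
    have Rc: "R \<in> carrier_mat p p" "R $$ (0, 0) \<noteq> 0" using spec by (auto simp: R_def)
    have ab: "(G * H) * R * (G * H) = (\<mu> * a * b) \<cdot>\<^sub>m R" by (rule lam_mult[OF Rc(1) Gc Hc a b e])
    have "Fq p (G * H) = (\<mu> * a * b) ^ k"
      using Fq_class[OF p odd K inC(3)] lamR_eq[OF p0 Rc ab] by (simp add: R_def k_def)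
    also have "\<dots> = \<mu> ^ k * a ^ k * b ^ k" by (simp add: power_mult_distrib)
    also have "a ^ k = Fq p G" using Fq_class[OF p odd K inC(1)] lamR_eq[OF p0 Rc a] by (simp add: R_def k_def)
    also have "b ^ k = Fq p H" using Fq_class[OF p odd K inC(2)] lamR_eq[OF p0 Rc b] by (simp add: R_def k_def)
    finally show ?thesis .
  qed
  show ?thesis
  proof (cases "G $$ (0, 0) = 0")
    case True
    have "scomm H G" using scomm_sym[OF p0 G H] e unfolding scomm_def by blast
    moreover have "scomm (G * H) G"
    proof -
      have "(G * H) * G = (1 / \<mu>) \<cdot>\<^sub>m (G * (G * H))"
      proof -
        have "H * G = (1 / \<mu>) \<cdot>\<^sub>m (G * H)" using e mu0 by (simp add: smult_smult_mat')
        then have "G * (H * G) = (1 / \<mu>) \<cdot>\<^sub>m (G * (G * H))" using Gc Hc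
          by (simp add: mult_smult_distrib[of _ p p _ p])
        then show ?thesis using Gc Hc by simp
      qed
      then show ?thesis unfolding scomm_def by blast
    qed
    ultimately show ?thesis using genR[OF G True] G H GH scomm_refl by (simp add: Cls_def k_def)
  next
    case Gd: False
    show ?thesis
    proof (cases "H $$ (0, 0) = 0")
      case True
      have "scomm G H" using e unfolding scomm_def by blast
      moreover have "scomm (G * H) H"
      proof -
        have "(G * H) * H = \<mu> \<cdot>\<^sub>m (H * G * H)" using e Gc Hc
          by (simp add: mult_smult_assoc_mat[of _ p p _ p])
        then have "(G * H) * H = \<mu> \<cdot>\<^sub>m (H * (G * H))" using Gc Hc by simp
        then show ?thesis unfolding scomm_def by blast
      qed
      ultimately show ?thesis using genR[OF H True] G H GH scomm_refl by (simp add: Cls_def k_def)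
    next
      case Hd: False
      obtain f b where g: "G = gmono p 1 f b" "per p f" "\<forall>t. f t \<noteq> 0"
        using G by (auto simp: Mono1_def)
      obtain g c where h: "H = gmono p 1 g c" "per p g" "\<forall>t. g t \<noteq> 0"
        using H by (auto simp: Mono1_def)
      have b: "int p dvd b" using Mono1_diag_iff[OF p0 g(1) g(3)] Gd by simp
      have c: "int p dvd c" using Mono1_diag_iff[OF p0 h(1) h(3)] Hd by simp
      have G0: "G = gmono p 1 f 0" using g(1) gmono_shift_cong[of p b 0] b by simp
      have H0: "H = gmono p 1 g 0" using h(1) gmono_shift_cong[of p c 0] c by simp
      have GH0: "G * H = gmono p 1 (\<lambda>t. f t * g t) 0"
        unfolding G0 H0 using gmono_mult[OF p0 _ h(2), of 1 f 0 1 0] by simp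
      have HG0: "H * G = gmono p 1 (\<lambda>t. f t * g t) 0"
        unfolding G0 H0 using gmono_mult[OF p0 _ g(2), of 1 g 0 1 0] by (simp add: mult.commute)
      have "1 \<cdot>\<^sub>m (H * G) = \<mu> \<cdot>\<^sub>m (H * G)" using e GH0 HG0 by simp
      moreover have "(H * G) $$ (0, 0) \<noteq> 0" using HG0 g(3) h(3) p0 by (simp add: gmono_index)
      ultimately have m1: "\<mu> = 1" using smult_eq_nonzero[of "H * G" 0 0 1 \<mu>] p0 Gc Hc by auto
      have "(G * H) $$ (0, 0) = f 0 * g 0" using GH0 p0 by (simp add: gmono_index)
      moreover have "G $$ (0, 0) = f 0" "H $$ (0, 0) = g 0" using G0 H0 p0 by (simp_all add: gmono_index)
      ultimately show ?thesis using g(3) h(3) m1 by (simp add: Fq_def power_mult_distrib)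
    qed
  qed
qed

lemma sum_split_mult:
  fixes g :: "nat \<Rightarrow> 'a :: comm_monoid_add"
  shows "(\<Sum>k<n * m. g k) = (\<Sum>k1<n. \<Sum>k2<m. g (k1 * m + k2))"
proof -
  have "(\<Sum>k<n * m. g k) = (\<Sum>k1<n. sum g {k1 * m..<k1 * m + m})"
    using sum.nat_group[where g = g and k = m and n = n] by simp
  also have "\<dots> = (\<Sum>k1<n. \<Sum>k2<m. g (k1 * m + k2))"
  proof -
    have "sum g {k1 * m..<k1 * m + m} = (\<Sum>k2<m. g (k1 * m + k2))" for k1
    proof -
      have "sum g {0 + k1 * m..<m + k1 * m} = (\<Sum>k2 = 0..<m. g (k2 + k1 * m))"
        by (rule sum.shift_bounds_nat_ivl)
      then show ?thesis by (simp add: add.commute lessThan_atLeast0)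
    qed
    then show ?thesis by simp
  qed
  finally show ?thesis .
qed

lemma kron_carrier: "kron A B \<in> carrier_mat (dim_row A * dim_row B) (dim_col A * dim_col B)"
  by (simp add: kron_def)

lemma kron_index:
  assumes "i < dim_row A * dim_row B" "j < dim_col A * dim_col B"
  shows "kron A B $$ (i, j) = A $$ (i div dim_row B, j div dim_col B) * B $$ (i mod dim_row B, j mod dim_col B)"
  using assms by (simp add: kron_def)

lemma kron_mult:
  fixes A C B D :: "complex mat"
  assumes A: "A \<in> carrier_mat n n" and C: "C \<in> carrier_mat n n"
    and B: "B \<in> carrier_mat m m" and D: "D \<in> carrier_mat m m"
  shows "kron A B * kron C D = kron (A * C) (B * D)"
proof (rule eq_matI)
  show "dim_row (kron A B * kron C D) = dim_row (kron (A * C) (B * D))"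
    using A B C D by (simp add: kron_def)
  show "dim_col (kron A B * kron C D) = dim_col (kron (A * C) (B * D))"
    using A B C D by (simp add: kron_def)
  fix i j assume "i < dim_row (kron (A * C) (B * D))" "j < dim_col (kron (A * C) (B * D))"
  then have ij: "i < n * m" "j < n * m" using A B C D by (simp_all add: kron_def)
  then have m0: "m > 0" by (cases m) auto
  have idm: "i div m < n" "j div m < n" using ij by (simp_all add: less_mult_imp_div_less)
  have imm: "i mod m < m" "j mod m < m" using m0 by simp_all
  have "(kron A B * kron C D) $$ (i, j) = (\<Sum>k<n * m. kron A B $$ (i, k) * kron C D $$ (k, j))"
    using ij A B C D by (simp add: kron_def scalar_prod_def lessThan_atLeast0 row_def col_def)
  also have "\<dots> = (\<Sum>k1<n. \<Sum>k2<m. kron A B $$ (i, k1 * m + k2) * kron C D $$ (k1 * m + k2, j))"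
    by (rule sum_split_mult)
  also have "\<dots> = (\<Sum>k1<n. \<Sum>k2<m. (A $$ (i div m, k1) * C $$ (k1, j div m)) * (B $$ (i mod m, k2) * D $$ (k2, j mod m)))"
  proof (intro sum.cong refl)
    fix k1 k2 assume k: "k1 \<in> {..<n}" "k2 \<in> {..<m}"
    have kk: "k1 * m + k2 < n * m"
    proof -
      have "k1 * m + k2 < k1 * m + m" using k by simp
      also have "\<dots> = Suc k1 * m" by simp
      also have "\<dots> \<le> n * m" using k by (intro mult_right_mono) auto
      finally show ?thesis .
    qed
    have dm: "(k1 * m + k2) div m = k1" "(k1 * m + k2) mod m = k2" using k m0 by auto
    show "kron A B $$ (i, k1 * m + k2) * kron C D $$ (k1 * m + k2, j) =
        A $$ (i div m, k1) * C $$ (k1, j div m) * (B $$ (i mod m, k2) * D $$ (k2, j mod m))"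
      using A B C D ij kk dm by (simp add: kron_index)
  qed
  also have "\<dots> = (\<Sum>k1<n. A $$ (i div m, k1) * C $$ (k1, j div m)) * (\<Sum>k2<m. B $$ (i mod m, k2) * D $$ (k2, j mod m))"
    by (simp add: sum_product)
  also have "\<dots> = (A * C) $$ (i div m, j div m) * (B * D) $$ (i mod m, j mod m)"
    using A B C D idm imm by (simp add: scalar_prod_def lessThan_atLeast0 row_def col_def)
  also have "\<dots> = kron (A * C) (B * D) $$ (i, j)"
    using A B C D ij by (simp add: kron_index)
  finally show "(kron A B * kron C D) $$ (i, j) = kron (A * C) (B * D) $$ (i, j)" .
qed

lemma kron_one: "kron (1\<^sub>m a) (1\<^sub>m b) = (1\<^sub>m (a * b) :: complex mat)"
proof (rule eq_matI)
  fix i j assume "i < dim_row (1\<^sub>m (a * b) :: complex mat)" "j < dim_col (1\<^sub>m (a * b) :: complex mat)"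
  then have ij: "i < a * b" "j < a * b" by auto
  then have b0: "b > 0" by (cases b) auto
  have idm: "i div b < a" "j div b < a" using ij by (simp_all add: less_mult_imp_div_less)
  have "(i div b = j div b \<and> i mod b = j mod b) \<longleftrightarrow> i = j" by (metis div_mult_mod_eq)
  then show "kron (1\<^sub>m a) (1\<^sub>m b) $$ (i, j) = (1\<^sub>m (a * b) :: complex mat) $$ (i, j)"
    using ij idm b0 by (auto simp: kron_index)
qed (auto simp: kron_def)

lemma kron_smult: "kron (a \<cdot>\<^sub>m A) B = a \<cdot>\<^sub>m kron A (B :: complex mat)"
proof (rule eq_matI)
  fix i j assume "i < dim_row (a \<cdot>\<^sub>m kron A B)" "j < dim_col (a \<cdot>\<^sub>m kron A B)"
  then have ij: "i < dim_row A * dim_row B" "j < dim_col A * dim_col B" by (auto simp: kron_def)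
  then have b0: "dim_row B > 0" "dim_col B > 0" by (cases "dim_row B"; auto; cases "dim_col B"; auto)+
  have "i div dim_row B < dim_row A" "j div dim_col B < dim_col A" using ij by (simp_all add: less_mult_imp_div_less)
  then show "kron (a \<cdot>\<^sub>m A) B $$ (i, j) = (a \<cdot>\<^sub>m kron A B) $$ (i, j)"
    using ij by (simp add: kron_index kron_def)
qed (auto simp: kron_def)

lemma kron_list_carrier:
  assumes "\<forall>M\<in>set Ms. M \<in> carrier_mat p p"
  shows "kron_list Ms \<in> carrier_mat (p ^ length Ms) (p ^ length Ms)"
  using assms
proof (induction Ms)
  case Nil then show ?case by simp
next
  case (Cons M Ms)
  then show ?case using kron_carrier[of M "kron_list Ms"] by auto
qed

lemma kron_list_mult:
  assumes "\<forall>x\<in>set xs. f x \<in> carrier_mat p p \<and> g x \<in> carrier_mat p p"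
  shows "kron_list (map f xs) * kron_list (map g xs) = kron_list (map (\<lambda>x. f x * g x) xs)"
  using assms
proof (induction xs)
  case Nil then show ?case by simp
next
  case (Cons x xs)
  have cf: "kron_list (map f xs) \<in> carrier_mat (p ^ length xs) (p ^ length xs)"
    using kron_list_carrier[of "map f xs" p] Cons.prems by auto
  have cg: "kron_list (map g xs) \<in> carrier_mat (p ^ length xs) (p ^ length xs)"
    using kron_list_carrier[of "map g xs" p] Cons.prems by auto
  have "kron_list (map f (x # xs)) * kron_list (map g (x # xs))
      = kron (f x * g x) (kron_list (map f xs) * kron_list (map g xs))"
    using kron_mult[of "f x" p "g x" _ "p ^ length xs"] cf cg Cons.prems by simp
  then show ?case using Cons by simp
qed

lemma kron_list_one: "kron_list (replicate n (1\<^sub>m p)) = 1\<^sub>m (p ^ n)"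
proof (induction n)
  case 0 then show ?case by simp
next
  case (Suc n) then show ?case by (simp add: kron_one)
qed

lemma kron_list_pow:
  assumes "\<forall>x\<in>set xs. f x \<in> carrier_mat p p"
  shows "kron_list (map f xs) ^\<^sub>m a = kron_list (map (\<lambda>x. f x ^\<^sub>m a) xs)"
proof (induction a)
  case 0
  have "dim_row (kron_list (map f xs)) = p ^ length xs"
    using kron_list_carrier[of "map f xs" p] assms by auto
  moreover have "map (\<lambda>x. f x ^\<^sub>m 0) xs = replicate (length xs) (1\<^sub>m p)"
    using assms by (intro nth_equalityI) auto
  ultimately show ?case by (simp add: kron_list_one)
next
  case (Suc a)
  have "kron_list (map f xs) ^\<^sub>m Suc a = kron_list (map (\<lambda>x. f x ^\<^sub>m a) xs) * kron_list (map f xs)"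
    using Suc by simp
  also have "\<dots> = kron_list (map (\<lambda>x. f x ^\<^sub>m a * f x) xs)"
    using assms by (intro kron_list_mult[of _ _ p]) auto
  finally show ?case by simp
qed

lemma kron_list_nonzero:
  assumes "\<forall>M\<in>set Ms. M \<in> carrier_mat p p \<and> (\<exists>i j. i < p \<and> j < p \<and> M $$ (i, j) \<noteq> 0)"
  shows "\<exists>i j. i < p ^ length Ms \<and> j < p ^ length Ms \<and> kron_list Ms $$ (i, j) \<noteq> 0"
  using assms
proof (induction Ms)
  case Nil show ?case by (rule exI[of _ 0], rule exI[of _ 0]) simp
next
  case (Cons M Ms)
  obtain u v where uv: "u < p ^ length Ms" "v < p ^ length Ms" "kron_list Ms $$ (u, v) \<noteq> 0"
    using Cons by auto
  obtain i j where ij: "i < p" "j < p" "M $$ (i, j) \<noteq> 0" using Cons.prems by auto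
  have M: "M \<in> carrier_mat p p" using Cons.prems by auto
  have X: "kron_list Ms \<in> carrier_mat (p ^ length Ms) (p ^ length Ms)"
    using kron_list_carrier[of Ms p] Cons.prems by auto
  define P where "P = p ^ length Ms"
  have lt: "i * P + u < p * P" "j * P + v < p * P"
  proof -
    have "i * P + u < i * P + P" using uv by (simp add: P_def)
    also have "\<dots> = Suc i * P" by simp
    also have "\<dots> \<le> p * P" using ij by (intro mult_right_mono) auto
    finally show "i * P + u < p * P" .
    have "j * P + v < j * P + P" using uv by (simp add: P_def)
    also have "\<dots> = Suc j * P" by simp
    also have "\<dots> \<le> p * P" using ij by (intro mult_right_mono) auto
    finally show "j * P + v < p * P" .
  qed
  have uvP: "u < P" "v < P" using uv by (simp_all add: P_def)
  have P0: "P > 0" using uvP by simp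
  have dm: "(i * P + u) div P = i" "(i * P + u) mod P = u" "(j * P + v) div P = j" "(j * P + v) mod P = v"
    using uvP P0 by auto
  have "kron M (kron_list Ms) $$ (i * P + u, j * P + v) = M $$ (i, j) * kron_list Ms $$ (u, v)"
    using M X lt uv dm by (simp add: kron_index P_def)
  then show ?case using lt ij uv M X by (intro exI[of _ "i * P + u"] exI[of _ "j * P + v"]) (simp add: P_def)
qed

lemma kron_list_extract:
  fixes As Bs :: "complex mat list"
  assumes len: "length As = length Bs"
    and A: "\<forall>M\<in>set As. M \<in> carrier_mat p p"
    and B: "\<forall>M\<in>set Bs. M \<in> carrier_mat p p \<and> (\<exists>i j. i < p \<and> j < p \<and> M $$ (i, j) \<noteq> 0)"
    and e: "kron_list As = c \<cdot>\<^sub>m kron_list Bs" and c: "c \<noteq> 0"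
  shows "\<exists>\<mu>. (\<forall>k<length As. As ! k = \<mu> k \<cdot>\<^sub>m Bs ! k) \<and> (\<Prod>k<length As. \<mu> k) = c"
  using len A B e c
proof (induction As Bs arbitrary: c rule: list_induct2)
  case Nil
  have "(1\<^sub>m 1 :: complex mat) $$ (0, 0) = (c \<cdot>\<^sub>m (1\<^sub>m 1 :: complex mat)) $$ (0, 0)" using Nil by simp
  then have "c = 1" by simp
  then show ?case by simp
next
  case (Cons A As B Bs)
  define X where "X = kron_list As"
  define Y where "Y = kron_list Bs"
  define P where "P = p ^ length As"
  have Ac: "A \<in> carrier_mat p p" and Bc: "B \<in> carrier_mat p p" using Cons.prems by auto
  have Xc: "X \<in> carrier_mat P P" unfolding X_def P_def by (rule kron_list_carrier) (use Cons.prems in auto)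
  have Yc: "Y \<in> carrier_mat P P" unfolding Y_def P_def using Cons.hyps kron_list_carrier[of Bs p] Cons.prems by auto
  obtain u v where uv: "u < P" "v < P" "Y $$ (u, v) \<noteq> 0"
    using kron_list_nonzero[of Bs p] Cons.prems Cons.hyps unfolding Y_def P_def by auto
  obtain i1 j1 where ij1: "i1 < p" "j1 < p" "B $$ (i1, j1) \<noteq> 0" using Cons.prems by auto
  have eq: "kron A X = c \<cdot>\<^sub>m kron B Y" using Cons.prems(3) by (simp add: X_def Y_def)
  have E: "A $$ (i, j) * X $$ (u', v') = c * (B $$ (i, j) * Y $$ (u', v'))"
    if i: "i < p" "j < p" "u' < P" "v' < P" for i j u' v'
  proof -
    have P0: "P > 0" using i by simp
    have lt: "i * P + u' < p * P" "j * P + v' < p * P"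
    proof -
      have "i * P + u' < i * P + P" using i by simp
      also have "\<dots> = Suc i * P" by simp
      also have "\<dots> \<le> p * P" using i by (intro mult_right_mono) auto
      finally show "i * P + u' < p * P" .
      have "j * P + v' < j * P + P" using i by simp
      also have "\<dots> = Suc j * P" by simp
      also have "\<dots> \<le> p * P" using i by (intro mult_right_mono) auto
      finally show "j * P + v' < p * P" .
    qed
    have dm: "(i * P + u') div P = i" "(i * P + u') mod P = u'" "(j * P + v') div P = j" "(j * P + v') mod P = v'"
      using i P0 by auto
    have "kron A X $$ (i * P + u', j * P + v') = (c \<cdot>\<^sub>m kron B Y) $$ (i * P + u', j * P + v')"
      using eq by simp
    then show ?thesis using lt dm Ac Bc Xc Yc by (simp add: kron_index kron_def)
  qed
  have Xuv: "X $$ (u, v) \<noteq> 0" and Aij: "A $$ (i1, j1) \<noteq> 0"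
    using E[OF ij1(1,2) uv(1,2)] Cons.prems(4) ij1(3) uv(3) by auto
  define \<mu>0 where "\<mu>0 = c * Y $$ (u, v) / X $$ (u, v)"
  have Aeq: "A = \<mu>0 \<cdot>\<^sub>m B"
  proof (rule eq_matI)
    fix i j assume "i < dim_row (\<mu>0 \<cdot>\<^sub>m B)" "j < dim_col (\<mu>0 \<cdot>\<^sub>m B)"
    then have ij: "i < p" "j < p" using Bc by auto
    have "A $$ (i, j) * X $$ (u, v) = c * (B $$ (i, j) * Y $$ (u, v))" by (rule E[OF ij uv(1,2)])
    then have "A $$ (i, j) = \<mu>0 * B $$ (i, j)" using Xuv by (simp add: \<mu>0_def field_simps)
    then show "A $$ (i, j) = (\<mu>0 \<cdot>\<^sub>m B) $$ (i, j)" using ij Bc by simp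
  qed (use Ac Bc in auto)
  have m0: "\<mu>0 \<noteq> 0" using Aij Aeq ij1 Bc by auto
  have Xeq: "X = (c / \<mu>0) \<cdot>\<^sub>m Y"
  proof (rule eq_matI)
    fix i j assume "i < dim_row ((c / \<mu>0) \<cdot>\<^sub>m Y)" "j < dim_col ((c / \<mu>0) \<cdot>\<^sub>m Y)"
    then have ij: "i < P" "j < P" using Yc by auto
    have "A $$ (i1, j1) * X $$ (i, j) = c * (B $$ (i1, j1) * Y $$ (i, j))" by (rule E[OF ij1(1,2) ij])
    moreover have "A $$ (i1, j1) = \<mu>0 * B $$ (i1, j1)" using Aeq ij1 Bc by simp
    ultimately have "X $$ (i, j) = (c / \<mu>0) * Y $$ (i, j)" using m0 ij1(3) by (simp add: field_simps)
    then show "X $$ (i, j) = ((c / \<mu>0) \<cdot>\<^sub>m Y) $$ (i, j)" using ij Yc by simp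
  qed (use Xc Yc in auto)
  have "c / \<mu>0 \<noteq> 0" using m0 Cons.prems(4) by simp
  then obtain \<mu>' where mu': "\<forall>k<length As. As ! k = \<mu>' k \<cdot>\<^sub>m Bs ! k" "(\<Prod>k<length As. \<mu>' k) = c / \<mu>0"
    using Cons.IH[of "c / \<mu>0"] Cons.prems Xeq unfolding X_def Y_def by auto
  define \<mu> where "\<mu> = (\<lambda>k. if k = 0 then \<mu>0 else \<mu>' (k - 1))"
  have "\<forall>k<length (A # As). (A # As) ! k = \<mu> k \<cdot>\<^sub>m (B # Bs) ! k"
  proof (intro allI impI)
    fix k assume k: "k < length (A # As)"
    show "(A # As) ! k = \<mu> k \<cdot>\<^sub>m (B # Bs) ! k"
    proof (cases k)
      case 0 then show ?thesis using Aeq by (simp add: \<mu>_def)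
    next
      case (Suc k') then show ?thesis using mu'(1) k by (simp add: \<mu>_def)
    qed
  qed
  moreover have "(\<Prod>k<length (A # As). \<mu> k) = c"
  proof -
    have "(\<Prod>k<length (A # As). \<mu> k) = \<mu> 0 * (\<Prod>k<length As. \<mu> (Suc k))"
      unfolding length_Cons by (rule prod.lessThan_Suc_shift)
    also have "\<dots> = \<mu>0 * (c / \<mu>0)" using mu'(2) by (simp add: \<mu>_def)
    also have "\<dots> = c" using m0 by simp
    finally show ?thesis .
  qed
  ultimately show ?case by blast
qed

lemma comm_foldr:
  fixes M :: "complex mat"
  assumes M: "M \<in> carrier_mat n n" and t: "\<forall>j\<in>set js. t j \<in> carrier_mat n n \<and> M * t j = t j * M"
  shows "M * foldr (\<lambda>j acc. t j * acc) js (1\<^sub>m n) = foldr (\<lambda>j acc. t j * acc) js (1\<^sub>m n) * M"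
  using t
proof (induction js)
  case Nil then show ?case using M by simp
next
  case (Cons j js)
  define F where "F = foldr (\<lambda>j acc. t j * acc) js (1\<^sub>m n)"
  have Fc: "F \<in> carrier_mat n n" unfolding F_def using Cons.prems
    by (induction js) auto
  have tj: "t j \<in> carrier_mat n n" "M * t j = t j * M" using Cons.prems by auto
  have IH: "M * F = F * M" using Cons by (simp add: F_def)
  have "M * (t j * F) = (M * t j) * F" using assoc_mult_mat[OF M tj(1) Fc] by simp
  also have "\<dots> = t j * (M * F)" using tj(2) assoc_mult_mat[OF tj(1) M Fc] by simp
  also have "\<dots> = (t j * F) * M" using IH assoc_mult_mat[OF tj(1) Fc M] by simp
  finally show ?case by (simp add: F_def)
qed

lemma Fq_one: "p > 0 \<Longrightarrow> Fq p (1\<^sub>m p) = 1"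
  by (simp add: Fq_def)

lemma global_prod:
  assumes p: "prime p" and odd: "odd p"
    and L: "\<forall>j\<in>set js. length (L j) = N \<and> set (L j) \<subseteq> Mono1 p"
    and comm: "\<forall>j\<in>set js. \<forall>k\<in>set js. kron_list (L j) * kron_list (L k) = kron_list (L k) * kron_list (L j)"
  shows "foldr (\<lambda>j acc. kron_list (L j) * acc) js (1\<^sub>m (p ^ N))
           = kron_list (map (\<lambda>k. foldr (\<lambda>j acc. (L j ! k) * acc) js (1\<^sub>m p)) [0..<N])
         \<and> (\<forall>k<N. foldr (\<lambda>j acc. (L j ! k) * acc) js (1\<^sub>m p) \<in> Mono1 p)
         \<and> (\<Prod>k<N. Fq p (foldr (\<lambda>j acc. (L j ! k) * acc) js (1\<^sub>m p)))
             = prod_list (map (\<lambda>j. \<Prod>k<N. Fq p (L j ! k)) js)"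
  using L comm
proof (induction js)
  case Nil
  have p0: "p > 0" using p prime_gt_0_nat by blast
  have "map (\<lambda>k. 1\<^sub>m p) [0..<N] = replicate N (1\<^sub>m p :: complex mat)"
    by (intro nth_equalityI) auto
  then show ?case using Mono1_one Fq_one[OF p0] by (simp add: kron_list_one)
next
  case (Cons j0 js)
  have p0: "p > 0" using p prime_gt_0_nat by blast
  define Pf where "Pf = (\<lambda>k. foldr (\<lambda>j acc. (L j ! k) * acc) js (1\<^sub>m p))"
  define T where "T = foldr (\<lambda>j acc. kron_list (L j) * acc) js (1\<^sub>m (p ^ N))"
  have IH: "T = kron_list (map Pf [0..<N])" "\<forall>k<N. Pf k \<in> Mono1 p"
    "(\<Prod>k<N. Fq p (Pf k)) = prod_list (map (\<lambda>j. \<Prod>k<N. Fq p (L j ! k)) js)"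
    using Cons.IH Cons.prems unfolding Pf_def T_def by auto
  have Lj0: "length (L j0) = N" "set (L j0) \<subseteq> Mono1 p" using Cons.prems by auto
  have Lk: "\<forall>k<N. L j0 ! k \<in> Mono1 p" using Lj0 by (auto simp: nth_mem subset_iff)
  have Lmap: "L j0 = map (\<lambda>k. L j0 ! k) [0..<N]" using Lj0(1) map_nth[of "L j0"] by simp
  have carrier_t: "kron_list (L j) \<in> carrier_mat (p ^ N) (p ^ N)" if "j \<in> set (j0 # js)" for j
    using kron_list_carrier[of "L j" p] Cons.prems that Mono1_carrier by fastforce
  have cx: "\<forall>x\<in>set [0..<N]. L j0 ! x \<in> carrier_mat p p \<and> Pf x \<in> carrier_mat p p"
    using Lk IH(2) Mono1_carrier by auto
  have cx2: "\<forall>x\<in>set [0..<N]. Pf x \<in> carrier_mat p p \<and> L j0 ! x \<in> carrier_mat p p"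
    using cx by auto
  have Lm': "kron_list (map (\<lambda>k. L j0 ! k) [0..<N]) = kron_list (L j0)"
    by (rule arg_cong[OF Lmap[symmetric]])
  have prod_eq: "kron_list (L j0) * kron_list (map Pf [0..<N]) = kron_list (map (\<lambda>k. L j0 ! k * Pf k) [0..<N])"
    using kron_list_mult[OF cx] unfolding Lm' .
  have comm0: "kron_list (L j0) * T = T * kron_list (L j0)"
  proof -
    have "\<forall>j\<in>set js. kron_list (L j) \<in> carrier_mat (p ^ N) (p ^ N) \<and> kron_list (L j0) * kron_list (L j) = kron_list (L j) * kron_list (L j0)"
    proof
      fix j assume "j \<in> set js"
      then have j': "j \<in> set (j0 # js)" by simp
      have j0': "j0 \<in> set (j0 # js)" by simp
      show "kron_list (L j) \<in> carrier_mat (p ^ N) (p ^ N) \<and> kron_list (L j0) * kron_list (L j) = kron_list (L j) * kron_list (L j0)"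
        using Cons.prems(2)[rule_format, OF j0' j'] carrier_t[OF j'] by blast
    qed
    then show ?thesis unfolding T_def by (intro comm_foldr[OF carrier_t[of j0]]) auto
  qed
  have prod_eq2: "kron_list (map Pf [0..<N]) * kron_list (L j0) = kron_list (map (\<lambda>k. Pf k * L j0 ! k) [0..<N])"
    using kron_list_mult[OF cx2] unfolding Lm' .
  have part1: "foldr (\<lambda>j acc. kron_list (L j) * acc) (j0 # js) (1\<^sub>m (p ^ N))
      = kron_list (map (\<lambda>k. foldr (\<lambda>j acc. (L j ! k) * acc) (j0 # js) (1\<^sub>m p)) [0..<N])"
    using prod_eq IH(1) by (simp add: T_def Pf_def)
  have part2: "\<forall>k<N. foldr (\<lambda>j acc. (L j ! k) * acc) (j0 # js) (1\<^sub>m p) \<in> Mono1 p"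
    using Mono1_mult[OF p0] Lk IH(2) by (simp add: Pf_def)
  have keq: "kron_list (map (\<lambda>k. L j0 ! k * Pf k) [0..<N]) = 1 \<cdot>\<^sub>m kron_list (map (\<lambda>k. Pf k * L j0 ! k) [0..<N])"
    using prod_eq prod_eq2 comm0 IH(1) by simp
  obtain \<mu> where mu: "\<forall>k<N. L j0 ! k * Pf k = \<mu> k \<cdot>\<^sub>m (Pf k * L j0 ! k)" "(\<Prod>k<N. \<mu> k) = 1"
  proof -
    have "\<exists>\<mu>. (\<forall>k<length (map (\<lambda>k. L j0 ! k * Pf k) [0..<N]).
              map (\<lambda>k. L j0 ! k * Pf k) [0..<N] ! k = \<mu> k \<cdot>\<^sub>m map (\<lambda>k. Pf k * L j0 ! k) [0..<N] ! k)
          \<and> (\<Prod>k<length (map (\<lambda>k. L j0 ! k * Pf k) [0..<N]). \<mu> k) = 1"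
    proof (rule kron_list_extract[OF _ _ _ keq])
      show "\<forall>M\<in>set (map (\<lambda>k. L j0 ! k * Pf k) [0..<N]). M \<in> carrier_mat p p"
        using Lk IH(2) Mono1_carrier Mono1_mult[OF p0] by auto
      show "\<forall>M\<in>set (map (\<lambda>k. Pf k * L j0 ! k) [0..<N]). M \<in> carrier_mat p p \<and> (\<exists>i j. i < p \<and> j < p \<and> M $$ (i, j) \<noteq> 0)"
        using Lk IH(2) Mono1_carrier Mono1_mult[OF p0] Mono1_nonzero[OF p0] by auto
    qed auto
    then show ?thesis using that by auto
  qed
  have "(\<Prod>k<N. Fq p (L j0 ! k * Pf k)) = (\<Prod>k<N. \<mu> k ^ ((p + 1) div 2) * Fq p (L j0 ! k) * Fq p (Pf k))"
    using Fq_qh[OF p odd] Lk IH(2) mu(1) by (intro prod.cong refl) auto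
  also have "\<dots> = (\<Prod>k<N. \<mu> k) ^ ((p + 1) div 2) * (\<Prod>k<N. Fq p (L j0 ! k)) * (\<Prod>k<N. Fq p (Pf k))"
    by (simp add: prod.distrib prod_power_distrib)
  also have "\<dots> = (\<Prod>k<N. Fq p (L j0 ! k)) * prod_list (map (\<lambda>j. \<Prod>k<N. Fq p (L j ! k)) js)"
    using mu(2) IH(3) by simp
  finally have part3: "(\<Prod>k<N. Fq p (foldr (\<lambda>j acc. (L j ! k) * acc) (j0 # js) (1\<^sub>m p)))
      = prod_list (map (\<lambda>j. \<Prod>k<N. Fq p (L j ! k)) (j0 # js))" by (simp add: Pf_def)
  show ?case using part1 part2 part3 by blast
qed

lemma prod_list_upt: "prod_list (map f [0..<n]) = (\<Prod>k<n. f k :: 'a :: comm_monoid_mult)"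
  by (induction n) (auto simp: mult.commute)

lemma omega_pow: "p > 0 \<Longrightarrow> omega p ^ k = cis (2 * pi * real k / real p)"
  by (simp add: omega_def DeMoivre field_simps)

lemma omega_p: "p > 0 \<Longrightarrow> omega p ^ p = 1"
  by (simp add: omega_pow)

lemma omega_pow_p: assumes "p > 0" shows "(omega p ^ k) ^ p = 1"
proof -
  have "(omega p ^ k) ^ p = (omega p ^ p) ^ k" by (metis power_mult mult.commute)
  then show ?thesis using omega_p[OF assms] by simp
qed

lemma omega_pow_mod: assumes "p > 0" shows "omega p ^ k = omega p ^ (k mod p)"
proof -
  have "omega p ^ k = omega p ^ (p * (k div p) + k mod p)" by simp
  also have "\<dots> = omega p ^ (p * (k div p)) * omega p ^ (k mod p)" by (rule power_add)
  also have "omega p ^ (p * (k div p)) = (omega p ^ p) ^ (k div p)" by (rule power_mult)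
  finally show ?thesis using omega_p[OF assms] by simp
qed

lemma omega_inj: assumes p: "p > 0" and e: "omega p ^ m = omega p ^ n" shows "m mod p = n mod p"
proof -
  have inj: "inj_on (\<lambda>k. cis (2 * pi * real k / real p)) {..<p}"
    using bij_betw_roots_unity[OF p] by (simp add: bij_betw_def)
  have "omega p ^ (m mod p) = omega p ^ (n mod p)" using e omega_pow_mod[OF p] by metis
  then have "cis (2 * pi * real (m mod p) / real p) = cis (2 * pi * real (n mod p) / real p)"
    using omega_pow[OF p] by simp
  then show ?thesis using inj p by (auto simp: inj_on_def)
qed

lemma root_omega: assumes p: "p > 0" and z: "z ^ p = 1" shows "\<exists>k. z = omega p ^ k"
proof -
  have "z \<in> (\<lambda>k. cis (2 * pi * real k / real p)) ` {..<p}"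
    using bij_betw_roots_unity[OF p] z by (simp add: bij_betw_def)
  then obtain k where "z = cis (2 * pi * real k / real p)" by auto
  then show ?thesis using omega_pow[OF p] by metis
qed

lemma omega_nz: "omega p \<noteq> 0" by (simp add: omega_def)

lemma norm_omega_pow: "norm (omega p ^ k) = 1" by (simp add: omega_def norm_power)

lemma sc_mult: "(a \<cdot>\<^sub>m 1\<^sub>m n) * (b \<cdot>\<^sub>m 1\<^sub>m n) = (a * b) \<cdot>\<^sub>m (1\<^sub>m n :: complex mat)"
proof -
  have "(a \<cdot>\<^sub>m 1\<^sub>m n) * (b \<cdot>\<^sub>m 1\<^sub>m n) = a \<cdot>\<^sub>m (1\<^sub>m n * (b \<cdot>\<^sub>m (1\<^sub>m n :: complex mat)))"
    by (rule mult_smult_assoc_mat) auto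
  also have "\<dots> = a \<cdot>\<^sub>m (b \<cdot>\<^sub>m (1\<^sub>m n :: complex mat))" by simp
  finally show ?thesis by (simp add: smult_smult_mat')
qed

lemma sc_pow: "(a \<cdot>\<^sub>m 1\<^sub>m n) ^\<^sub>m k = (a ^ k) \<cdot>\<^sub>m (1\<^sub>m n :: complex mat)"
proof (induction k)
  case 0 then show ?case by simp
next
  case (Suc k)
  have "(a \<cdot>\<^sub>m 1\<^sub>m n) ^\<^sub>m Suc k = (a ^ k \<cdot>\<^sub>m 1\<^sub>m n) * (a \<cdot>\<^sub>m (1\<^sub>m n :: complex mat))" using Suc by simp
  also have "\<dots> = (a ^ Suc k) \<cdot>\<^sub>m 1\<^sub>m n" by (simp add: sc_mult mult.commute)
  finally show ?case .
qed

lemma foldr_sc: "foldr (\<lambda>M acc. M * acc) (map (\<lambda>j. e j \<cdot>\<^sub>m 1\<^sub>m n) js) (1\<^sub>m n)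
   = (prod_list (map e js)) \<cdot>\<^sub>m (1\<^sub>m n :: complex mat)"
  by (induction js) (auto simp: sc_mult)

lemma pow_comm_one:
  assumes A: "A \<in> carrier_mat n n" and B: "B \<in> carrier_mat n n" and c: "A * B = B * (A :: complex mat)"
  shows "A ^\<^sub>m k * B = B * A ^\<^sub>m k"
proof (induction k)
  case 0 then show ?case using A B by simp
next
  case (Suc k)
  have Ak: "A ^\<^sub>m k \<in> carrier_mat n n" using A by simp
  have "A ^\<^sub>m Suc k * B = A ^\<^sub>m k * (A * B)" using assoc_mult_mat[OF Ak A B] by simp
  also have "\<dots> = (A ^\<^sub>m k * B) * A" using c assoc_mult_mat[OF Ak B A] by simp
  also have "\<dots> = B * A ^\<^sub>m Suc k" using Suc assoc_mult_mat[OF B Ak A] by simp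
  finally show ?case .
qed

lemma pow_comm:
  assumes A: "A \<in> carrier_mat n n" and B: "B \<in> carrier_mat n n" and c: "A * B = B * (A :: complex mat)"
  shows "A ^\<^sub>m a * B ^\<^sub>m b = B ^\<^sub>m b * A ^\<^sub>m a"
proof -
  have "A ^\<^sub>m a * B = B * A ^\<^sub>m a" by (rule pow_comm_one[OF A B c])
  then have "B * A ^\<^sub>m a = A ^\<^sub>m a * B" by simp
  then have "B ^\<^sub>m b * A ^\<^sub>m a = A ^\<^sub>m a * B ^\<^sub>m b"
    by (rule pow_comm_one[OF B pow_carrier_mat[OF A]])
  then show ?thesis by simp
qed

lemma Fq_pow:
  assumes p: "prime p" and odd: "odd p" and M: "M \<in> Mono1 p"
  shows "Fq p (M ^\<^sub>m k) = Fq p M ^ k"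
proof (induction k)
  have p0: "p > 0" using p prime_gt_0_nat by blast
  case 0 then show ?case using Mono1_carrier[OF M] Fq_one[OF p0] by simp
next
  have p0: "p > 0" using p prime_gt_0_nat by blast
  case (Suc k)
  have Mc: "M \<in> carrier_mat p p" by (rule Mono1_carrier[OF M])
  have "M ^\<^sub>m k * M = 1 \<cdot>\<^sub>m (M * M ^\<^sub>m k)" using pow_comm_one[OF Mc Mc refl] by simp
  then have "Fq p (M ^\<^sub>m k * M) = 1 ^ ((p + 1) div 2) * Fq p (M ^\<^sub>m k) * Fq p M"
    by (rule Fq_qh[OF p odd Mono1_pow[OF p0 M] M])
  then show ?case using Suc by simp
qed

lemma Fq_sc: "p > 0 \<Longrightarrow> z \<noteq> 0 \<Longrightarrow> Fq p (z \<cdot>\<^sub>m 1\<^sub>m p) = z ^ (p + 1)"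
  by (simp add: Fq_def)

lemma kron_list_sc:
  assumes N: "N \<ge> 1"
  shows "kron_list ((z \<cdot>\<^sub>m 1\<^sub>m p) # replicate (N - 1) (1\<^sub>m p)) = z \<cdot>\<^sub>m (1\<^sub>m (p ^ N) :: complex mat)"
proof -
  have "kron_list ((z \<cdot>\<^sub>m 1\<^sub>m p) # replicate (N - 1) (1\<^sub>m p)) = z \<cdot>\<^sub>m kron (1\<^sub>m p) (1\<^sub>m (p ^ (N - 1)))"
    by (simp add: kron_smult kron_list_one)
  also have "\<dots> = z \<cdot>\<^sub>m 1\<^sub>m (p * p ^ (N - 1))" by (simp add: kron_one)
  also have "p * p ^ (N - 1) = p ^ N" using N by (cases N) auto
  finally show ?thesis .
qed

lemma sc_in_KQ:
  assumes p0: "p > 0" and TQ: "Tpow p p \<subseteq> Q"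
  shows "(omega p ^ k) \<cdot>\<^sub>m 1\<^sub>m p \<in> KQ p Q"
proof -
  define z where "z = omega p ^ k"
  have S: "z \<cdot>\<^sub>m 1\<^sub>m p = Smat p (\<lambda>_. z)" by (intro eq_matI) (auto simp: Smat_def)
  have zp: "z ^ p = 1" using omega_pow_p[OF p0] by (simp add: z_def)
  have "Smat p (\<lambda>_. z) \<in> Tgrp p" unfolding Tgrp_def using zp by (auto simp: z_def norm_omega_pow)
  moreover have "Smat p (\<lambda>_. z) ^\<^sub>m p = 1\<^sub>m p" using sc_pow[of z p p] zp S by simp
  ultimately have "Smat p (\<lambda>_. z) \<in> Q" using TQ by (auto simp: Tpow_def)
  then have "Smat p (\<lambda>_. z) * Xmat p ^\<^sub>m 0 \<in> KQ p Q" using p0 by (intro KQ.gen) auto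
  moreover have "Smat p (\<lambda>_. z) * Xmat p ^\<^sub>m 0 = Smat p (\<lambda>_. z)" by (simp add: Xmat_def Smat_def)
  ultimately show ?thesis using S by (simp add: z_def)
qed

lemma sc_in_KQN:
  assumes p0: "p > 0" and TQ: "Tpow p p \<subseteq> Q" and N: "N \<ge> 1"
  shows "(omega p ^ k) \<cdot>\<^sub>m 1\<^sub>m (p ^ N) \<in> KQN p Q N"
proof -
  define L where "L = (omega p ^ k \<cdot>\<^sub>m 1\<^sub>m p) # replicate (N - 1) (1\<^sub>m p)"
  have "set L \<subseteq> KQ p Q" using sc_in_KQ[OF p0 TQ] KQ.one by (auto simp: L_def)
  moreover have "length L = N" using N by (simp add: L_def)
  moreover have "omega p ^ k \<cdot>\<^sub>m 1\<^sub>m (p ^ N) = kron_list L"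
    using kron_list_sc[OF N, of "omega p ^ k" p] by (simp add: L_def)
  ultimately show ?thesis unfolding KQN_def by blast
qed

lemma int_sum_mod:
  fixes A x :: "nat \<Rightarrow> int"
  shows "(\<Sum>j<s. (A j mod m) * (x j mod m)) mod m = (\<Sum>j<s. A j * x j) mod m"
proof -
  have "(\<Sum>j<s. (A j mod m) * (x j mod m)) mod m = (\<Sum>j<s. ((A j mod m) * (x j mod m)) mod m) mod m"
    by (rule mod_sum_eq[symmetric])
  also have "(\<Sum>j<s. ((A j mod m) * (x j mod m)) mod m) = (\<Sum>j<s. (A j * x j) mod m)"
    by (rule sum.cong[OF refl], rule mod_mult_eq)
  also have "(\<Sum>j<s. (A j * x j) mod m) mod m = (\<Sum>j<s. A j * x j) mod m" by (rule mod_sum_eq)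
  finally show ?thesis .
qed

lemma int_sum_mod1:
  fixes A x :: "nat \<Rightarrow> int"
  shows "(\<Sum>j<s. (A j mod m) * x j) mod m = (\<Sum>j<s. A j * x j) mod m"
proof -
  have "(\<Sum>j<s. (A j mod m) * x j) mod m = (\<Sum>j<s. ((A j mod m) * x j) mod m) mod m"
    by (rule mod_sum_eq[symmetric])
  also have "(\<Sum>j<s. ((A j mod m) * x j) mod m) = (\<Sum>j<s. (A j * x j) mod m)"
    by (rule sum.cong[OF refl], rule mod_mult_left_eq)
  also have "(\<Sum>j<s. (A j * x j) mod m) mod m = (\<Sum>j<s. A j * x j) mod m" by (rule mod_sum_eq)
  finally show ?thesis .
qed

theorem theorem3:
  fixes p r s m N :: nat and A :: "nat \<Rightarrow> nat \<Rightarrow> int" and c :: "nat \<Rightarrow> int"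
    and Q :: "complex mat set"
  assumes "prime p" and "odd p"
    and "m \<ge> 1" and "N \<ge> 1"
    and "is_subgroup_mat p Q"
    and "Tpow p p \<subseteq> Q" and "Q \<subseteq> Tpow p (p ^ m)"
    and "\<forall>S\<in>Q. Xmat p * S * (Xmat p ^\<^sub>m (p - 1)) \<in> Q"
  shows "(\<exists>g. quantum_solution p r s A c (p ^ N) (KQN p Q N) g)
     \<longleftrightarrow> (\<exists>x. classical_solution p r s A c x)"
proof
  have p: "prime p" and odd: "odd p" and N: "N \<ge> 1" using assms by auto
  have p0: "p > 0" using p prime_gt_0_nat by blast
  have p1: "p > 1" using p prime_gt_1_nat by blast
  have TQ: "Tpow p p \<subseteq> Q" using assms by simp
  have QT: "Q \<subseteq> Tgrp p" using assms(7) by (auto simp: Tpow_def)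
  define a where "a = (\<lambda>i j. nat (A i j mod int p))"
  define c' where "c' = (\<lambda>i. nat (c i mod int p))"
  have ai: "int (a i j) = A i j mod int p" for i j using p0 by (simp add: a_def)
  have ci: "int (c' i) = c i mod int p" for i using p0 by (simp add: c'_def)
  {
    assume "\<exists>g. quantum_solution p r s A c (p ^ N) (KQN p Q N) g"
    then obtain g where qs: "quantum_solution p r s A c (p ^ N) (KQN p Q N) g" by blast
    have gK: "\<forall>j<s. g j \<in> KQN p Q N" and gp: "\<forall>j<s. g j ^\<^sub>m p = 1\<^sub>m (p ^ N)"
      using qs unfolding quantum_solution_def by auto
    have gc: "\<forall>j<s. \<forall>k<s. (\<exists>i<r. A i j mod int p \<noteq> 0 \<and> A i k mod int p \<noteq> 0) \<longrightarrow> g j * g k = g k * g j"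
      and gr: "\<forall>i<r. ord_prod (p ^ N) s (\<lambda>j. g j ^\<^sub>m nat (A i j mod int p)) = (omega p ^ nat (c i mod int p)) \<cdot>\<^sub>m 1\<^sub>m (p ^ N)"
      using qs unfolding quantum_solution_def by blast+
    have "\<forall>j. \<exists>Ms. j < s \<longrightarrow> g j = kron_list Ms \<and> length Ms = N \<and> set Ms \<subseteq> Mono1 p"
    proof
      fix j show "\<exists>Ms. j < s \<longrightarrow> g j = kron_list Ms \<and> length Ms = N \<and> set Ms \<subseteq> Mono1 p"
      proof (cases "j < s")
        case True
        then obtain Ms where "g j = kron_list Ms" "length Ms = N" "set Ms \<subseteq> KQ p Q"
          using gK unfolding KQN_def by blast
        moreover have "set Ms \<subseteq> Mono1 p" using calculation(3) KQ_Mono1[OF p1 QT] by auto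
        ultimately show ?thesis by blast
      qed simp
    qed
    then obtain Ms where Ms: "\<forall>j<s. g j = kron_list (Ms j) \<and> length (Ms j) = N \<and> set (Ms j) \<subseteq> Mono1 p"
      using choice[of "\<lambda>j Ms. j < s \<longrightarrow> g j = kron_list Ms \<and> length Ms = N \<and> set Ms \<subseteq> Mono1 p"] by blast
    have Mk: "Ms j ! k \<in> Mono1 p" if "j < s" "k < N" for j k
      using Ms that by (auto simp: nth_mem subset_iff)
    have Mkc: "Ms j ! k \<in> carrier_mat p p" if "j < s" "k < N" for j k
      using Mk[OF that] Mono1_carrier by blast
    have gcar: "g j \<in> carrier_mat (p ^ N) (p ^ N)" if "j < s" for j
      using Ms that kron_list_carrier[of "Ms j" p] Mono1_carrier by fastforce
    define y where "y = (\<lambda>j. \<Prod>k<N. Fq p (Ms j ! k))"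
    have gpow: "g j ^\<^sub>m e = kron_list (map (\<lambda>M. M ^\<^sub>m e) (Ms j))" if "j < s" for j e
    proof -
      have sj: "set (Ms j) \<subseteq> Mono1 p" using Ms that by blast
      have "g j = kron_list (map (\<lambda>M. M) (Ms j))" using Ms that by simp
      also have "\<dots> ^\<^sub>m e = kron_list (map (\<lambda>M. M ^\<^sub>m e) (Ms j))"
        by (rule kron_list_pow[of _ _ p]) (use sj Mono1_carrier in blast)
      finally show ?thesis by simp
    qed
    have one_nz: "\<exists>i j. i < p \<and> j < p \<and> (1\<^sub>m p :: complex mat) $$ (i, j) \<noteq> 0"
      using p0 by (intro exI[of _ 0]) auto
    have extract1: "\<exists>\<nu>. (\<forall>k<N. Pk k = \<nu> k \<cdot>\<^sub>m 1\<^sub>m p) \<and> (\<Prod>k<N. \<nu> k) = z"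
      if Pc: "\<forall>k<N. Pk k \<in> carrier_mat p p" and e: "kron_list (map Pk [0..<N]) = z \<cdot>\<^sub>m 1\<^sub>m (p ^ N)"
        and z: "z \<noteq> 0" for Pk z
    proof -
      have "kron_list (map Pk [0..<N]) = z \<cdot>\<^sub>m kron_list (replicate N (1\<^sub>m p))"
        using e by (simp add: kron_list_one)
      then have "\<exists>\<nu>. (\<forall>k<length (map Pk [0..<N]). map Pk [0..<N] ! k = \<nu> k \<cdot>\<^sub>m replicate N (1\<^sub>m p) ! k)
          \<and> (\<Prod>k<length (map Pk [0..<N]). \<nu> k) = z"
        by (intro kron_list_extract[of _ _ p]) (use Pc z p0 one_nz in auto)
      then show ?thesis by auto
    qed
    have Fsc: "(\<Prod>k<N. Fq p (\<nu> k \<cdot>\<^sub>m 1\<^sub>m p)) = (\<Prod>k<N. \<nu> k) ^ (p + 1)"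
      if "(\<Prod>k<N. \<nu> k) \<noteq> 0" for \<nu>
    proof -
      have "\<forall>k<N. \<nu> k \<noteq> 0" using that by (auto simp: prod_zero_iff)
      then have "(\<Prod>k<N. Fq p (\<nu> k \<cdot>\<^sub>m 1\<^sub>m p)) = (\<Prod>k<N. \<nu> k ^ (p + 1))"
        using Fq_sc[OF p0] by (intro prod.cong refl) auto
      also have "\<dots> = (\<Prod>k<N. \<nu> k) ^ (p + 1)" by (rule prod_power_distrib[symmetric])
      finally show ?thesis .
    qed
    have yp: "y j ^ p = 1" if j: "j < s" for j
    proof -
      have mn: "map (\<lambda>k. Ms j ! k) [0..<N] = Ms j" using Ms j map_nth[of "Ms j"] by simp
      have "map (\<lambda>M. M ^\<^sub>m p) (Ms j) = map (\<lambda>M. M ^\<^sub>m p) (map (\<lambda>k. Ms j ! k) [0..<N])"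
        by (simp only: mn)
      then have "kron_list (map (\<lambda>k. (\<lambda>M. M ^\<^sub>m p) (Ms j ! k)) [0..<N]) = kron_list (map (\<lambda>M. M ^\<^sub>m p) (Ms j))"
        by (simp add: comp_def)
      also have "\<dots> = g j ^\<^sub>m p" by (rule gpow[OF j, symmetric])
      also have "\<dots> = 1 \<cdot>\<^sub>m 1\<^sub>m (p ^ N)" using gp j by simp
      finally obtain \<nu> where nu: "\<forall>k<N. (Ms j ! k) ^\<^sub>m p = \<nu> k \<cdot>\<^sub>m 1\<^sub>m p" "(\<Prod>k<N. \<nu> k) = 1"
        using extract1[of "\<lambda>k. (Ms j ! k) ^\<^sub>m p" 1] Mkc[OF j] by auto
      have "y j ^ p = (\<Prod>k<N. Fq p (Ms j ! k) ^ p)" by (simp add: y_def prod_power_distrib)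
      also have "\<dots> = (\<Prod>k<N. Fq p ((Ms j ! k) ^\<^sub>m p))"
        using Fq_pow[OF p odd] Mk[OF j] by (intro prod.cong refl) auto
      also have "\<dots> = (\<Prod>k<N. Fq p (\<nu> k \<cdot>\<^sub>m 1\<^sub>m p))" using nu(1) by (intro prod.cong refl) auto
      also have "\<dots> = 1" using Fsc[of \<nu>] nu(2) by simp
      finally show ?thesis .
    qed
    define xn where "xn = (\<lambda>j. SOME k. y j = omega p ^ k)"
    have yx: "y j = omega p ^ xn j" if "j < s" for j
      unfolding xn_def by (rule someI_ex) (rule root_omega[OF p0 yp[OF that]])
    have row: "(\<Sum>j<s. a i j * xn j) mod p = c' i mod p" if i: "i < r" for i
    proof -
      define L where "L = (\<lambda>j. map (\<lambda>M. M ^\<^sub>m a i j) (Ms j))"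
      have tL: "kron_list (L j) = g j ^\<^sub>m a i j" if "j < s" for j using gpow[OF that] by (simp add: L_def)
      have Lp: "\<forall>j\<in>set [0..<s]. length (L j) = N \<and> set (L j) \<subseteq> Mono1 p"
      proof
        fix j assume "j \<in> set [0..<s]"
        then have j: "j < s" by simp
        have sj: "set (Ms j) \<subseteq> Mono1 p" "length (Ms j) = N" using Ms j by blast+
        show "length (L j) = N \<and> set (L j) \<subseteq> Mono1 p"
          using sj Mono1_pow[OF p0] by (auto simp: L_def)
      qed
      have comm: "\<forall>j\<in>set [0..<s]. \<forall>k\<in>set [0..<s]. kron_list (L j) * kron_list (L k) = kron_list (L k) * kron_list (L j)"
      proof (intro ballI)
        fix j k assume "j \<in> set [0..<s]" "k \<in> set [0..<s]"
        then have jk: "j < s" "k < s" by auto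
        show "kron_list (L j) * kron_list (L k) = kron_list (L k) * kron_list (L j)"
        proof (cases "a i j = 0 \<or> a i k = 0")
          case True
          have c1: "g j ^\<^sub>m a i j \<in> carrier_mat (p ^ N) (p ^ N)" "g k ^\<^sub>m a i k \<in> carrier_mat (p ^ N) (p ^ N)"
            using gcar jk by auto
          show ?thesis unfolding tL[OF jk(1)] tL[OF jk(2)]
          proof (cases "a i j = 0")
            case True
            then have "g j ^\<^sub>m a i j = 1\<^sub>m (p ^ N)" using gcar[OF jk(1)] by simp
            then show "g j ^\<^sub>m a i j * g k ^\<^sub>m a i k = g k ^\<^sub>m a i k * g j ^\<^sub>m a i j"
              by (simp add: left_mult_one_mat[OF c1(2)] right_mult_one_mat[OF c1(2)])
          next
            case False
            then have "a i k = 0" using True by simp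
            then have "g k ^\<^sub>m a i k = 1\<^sub>m (p ^ N)" using gcar[OF jk(2)] by simp
            then show "g j ^\<^sub>m a i j * g k ^\<^sub>m a i k = g k ^\<^sub>m a i k * g j ^\<^sub>m a i j"
              by (simp add: left_mult_one_mat[OF c1(1)] right_mult_one_mat[OF c1(1)])
          qed
        next
          case False
          then have "A i j mod int p \<noteq> 0" "A i k mod int p \<noteq> 0" by (auto simp: a_def)
          then have "g j * g k = g k * g j" using gc jk i by blast
          then show ?thesis unfolding tL[OF jk(1)] tL[OF jk(2)] by (rule pow_comm[OF gcar[OF jk(1)] gcar[OF jk(2)]])
        qed
      qed
      note G = global_prod[OF p odd Lp comm]
      define Pk where "Pk = (\<lambda>k. foldr (\<lambda>j acc. (L j ! k) * acc) [0..<s] (1\<^sub>m p))"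
      have "ord_prod (p ^ N) s (\<lambda>j. g j ^\<^sub>m a i j) = foldr (\<lambda>j acc. kron_list (L j) * acc) [0..<s] (1\<^sub>m (p ^ N))"
      proof -
        have me: "map (\<lambda>j. g j ^\<^sub>m a i j) [0..<s] = map (\<lambda>j. kron_list (L j)) [0..<s]" using tL by simp
        have "ord_prod (p ^ N) s (\<lambda>j. g j ^\<^sub>m a i j) = foldr (\<lambda>M acc. M * acc) (map (\<lambda>j. kron_list (L j)) [0..<s]) (1\<^sub>m (p ^ N))"
          unfolding ord_prod_def me ..
        also have "\<dots> = foldr (\<lambda>j acc. kron_list (L j) * acc) [0..<s] (1\<^sub>m (p ^ N))"
          by (simp add: foldr_map comp_def)
        finally show ?thesis .
      qed
      also have "\<dots> = kron_list (map Pk [0..<N])" using G by (simp add: Pk_def)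
      finally have "kron_list (map Pk [0..<N]) = (omega p ^ c' i) \<cdot>\<^sub>m 1\<^sub>m (p ^ N)"
        using gr i by (simp add: a_def c'_def)
      then obtain \<nu> where nu: "\<forall>k<N. Pk k = \<nu> k \<cdot>\<^sub>m 1\<^sub>m p" "(\<Prod>k<N. \<nu> k) = omega p ^ c' i"
        using extract1[of Pk "omega p ^ c' i"] G Mono1_carrier omega_nz by (auto simp: Pk_def)
      have "(\<Prod>k<N. Fq p (Pk k)) = (omega p ^ c' i) ^ (p + 1)"
        using Fsc[of \<nu>] nu omega_nz by simp
      also have "\<dots> = omega p ^ c' i"
        using omega_pow_p[OF p0, of "c' i"] by (simp add: power_add)
      finally have lhs: "(\<Prod>k<N. Fq p (Pk k)) = omega p ^ c' i" .
      have "(\<Prod>k<N. Fq p (Pk k)) = prod_list (map (\<lambda>j. \<Prod>k<N. Fq p (L j ! k)) [0..<s])"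
        using G by (simp add: Pk_def)
      also have "\<dots> = (\<Prod>j<s. \<Prod>k<N. Fq p (L j ! k))" by (rule prod_list_upt)
      also have "\<dots> = (\<Prod>j<s. y j ^ a i j)"
      proof (intro prod.cong refl)
        fix j assume "j \<in> {..<s}"
        then have j: "j < s" by simp
        have "(\<Prod>k<N. Fq p (L j ! k)) = (\<Prod>k<N. Fq p (Ms j ! k) ^ a i j)"
          using Fq_pow[OF p odd] Mk[OF j] Ms j by (intro prod.cong refl) (auto simp: L_def)
        then show "(\<Prod>k<N. Fq p (L j ! k)) = y j ^ a i j" by (simp add: y_def prod_power_distrib)
      qed
      also have "\<dots> = (\<Prod>j<s. omega p ^ (a i j * xn j))"
        using yx by (intro prod.cong refl) (auto simp: power_mult[symmetric] mult.commute)
      also have "\<dots> = omega p ^ (\<Sum>j<s. a i j * xn j)" by (simp add: power_sum)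
      finally have "omega p ^ (\<Sum>j<s. a i j * xn j) = omega p ^ c' i" using lhs by simp
      then show ?thesis by (rule omega_inj[OF p0])
    qed
    define x where "x = (\<lambda>j. int (xn j))"
    have "classical_solution p r s A c x"
      unfolding classical_solution_def
    proof (intro allI impI)
      fix i assume i: "i < r"
      have "int ((\<Sum>j<s. a i j * xn j) mod p) = int (c' i mod p)" using row[OF i] by simp
      then have "(\<Sum>j<s. (A i j mod int p) * x j) mod int p = (c i mod int p) mod int p"
        by (simp add: of_nat_mod ai ci x_def)
      moreover have "(\<Sum>j<s. (A i j mod int p) * x j) mod int p = (\<Sum>j<s. A i j * x j) mod int p"
        by (rule int_sum_mod1)
      ultimately show "(\<Sum>j<s. A i j * x j) mod int p = c i mod int p" by simp
    qed
    then show "\<exists>x. classical_solution p r s A c x" by blast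
  }
  {
    assume "\<exists>x. classical_solution p r s A c x"
    then obtain x where cs: "\<forall>i<r. (\<Sum>j<s. A i j * x j) mod int p = c i mod int p"
      unfolding classical_solution_def by blast
    define xn where "xn = (\<lambda>j. nat (x j mod int p))"
    have xi: "int (xn j) = x j mod int p" for j using p0 by (simp add: xn_def)
    define g where "g = (\<lambda>j. (omega p ^ xn j) \<cdot>\<^sub>m 1\<^sub>m (p ^ N))"
    have "quantum_solution p r s A c (p ^ N) (KQN p Q N) g"
      unfolding quantum_solution_def
    proof (intro conjI allI impI)
      show "omega p \<cdot>\<^sub>m 1\<^sub>m (p ^ N) \<in> KQN p Q N" using sc_in_KQN[OF p0 TQ N, of 1] by simp
      fix j assume j: "j < s"
      show "g j \<in> KQN p Q N" using sc_in_KQN[OF p0 TQ N] by (simp add: g_def)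
      have "(omega p ^ xn j) ^ p = 1"
        using omega_pow_p[OF p0] by simp
      then show "g j ^\<^sub>m p = 1\<^sub>m (p ^ N)" by (simp add: g_def sc_pow)
    next
      fix j k assume "j < s" "k < s"
      show "g j * g k = g k * g j" by (simp add: g_def sc_mult mult.commute)
    next
      fix i assume i: "i < r"
      have "ord_prod (p ^ N) s (\<lambda>j. g j ^\<^sub>m nat (A i j mod int p))
          = foldr (\<lambda>M acc. M * acc) (map (\<lambda>j. (omega p ^ (xn j * a i j)) \<cdot>\<^sub>m 1\<^sub>m (p ^ N)) [0..<s]) (1\<^sub>m (p ^ N))"
        unfolding ord_prod_def by (simp add: g_def sc_pow a_def power_mult)
      also have "\<dots> = (prod_list (map (\<lambda>j. omega p ^ (xn j * a i j)) [0..<s])) \<cdot>\<^sub>m 1\<^sub>m (p ^ N)"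
        by (rule foldr_sc)
      also have "prod_list (map (\<lambda>j. omega p ^ (xn j * a i j)) [0..<s]) = omega p ^ (\<Sum>j<s. xn j * a i j)"
        by (simp add: prod_list_upt power_sum)
      also have "\<dots> = omega p ^ nat (c i mod int p)"
      proof -
        have "int ((\<Sum>j<s. xn j * a i j) mod p) = (\<Sum>j<s. (A i j mod int p) * (x j mod int p)) mod int p"
          by (simp add: of_nat_mod xi ai mult.commute)
        also have "\<dots> = (\<Sum>j<s. A i j * x j) mod int p" by (rule int_sum_mod)
        also have "\<dots> = c i mod int p" using cs i by simp
        also have "\<dots> = int (nat (c i mod int p) mod p)" using ci by (simp add: c'_def of_nat_mod)
        finally have e: "(\<Sum>j<s. xn j * a i j) mod p = nat (c i mod int p) mod p" by linarith
        have "omega p ^ (\<Sum>j<s. xn j * a i j) = omega p ^ ((\<Sum>j<s. xn j * a i j) mod p)"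
          by (rule omega_pow_mod[OF p0])
        also have "\<dots> = omega p ^ (nat (c i mod int p) mod p)" by (simp only: e)
        also have "\<dots> = omega p ^ nat (c i mod int p)" by (rule omega_pow_mod[OF p0, symmetric])
        finally show ?thesis .
      qed
      finally show "ord_prod (p ^ N) s (\<lambda>j. g j ^\<^sub>m nat (A i j mod int p)) = omega p ^ nat (c i mod int p) \<cdot>\<^sub>m 1\<^sub>m (p ^ N)" .
    qed
    then show "\<exists>g. quantum_solution p r s A c (p ^ N) (KQN p Q N) g" by blast
  }
qed


end
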